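(* Fix $1<p<\infty$. Let $X$ and $Y$ be Banach spaces such that $X$ has the approximation property, $\mathcal A(X,Y)\subsetneq\mathcal K(X,Y)$, and $\big(\bigoplus_{n=1}^\infty X\big)_{\ell^p}$ is linearly isomorphic to $X$. Let $Z_p:=\big(\bigoplus_{j=0}^\infty X_j\big)_{\ell^p}$ with $X_0=Y$ and $X_j=X$ for $j\ge1$, and for $\emptyset\neq A\subsetneq\mathbb N$ let \[ \mathcal I_A:=\{S\in\mathcal K(Z_p): P_0SJ_0\in\mathcal A(Y),\ P_0SJ_k\in\mathcal A(X,Y)\text{ for all }k\in A\}. \] Then $\mathcal I_A$ and $\mathcal I_B$ are isomorphic as Banach algebras for all $\emptyset\neq A,B\subsetneq\mathbb N$.
   Context: $\mathbb N=\{1,2,3,\ldots\}$. For Banach spaces $E,F$, $\mathcal K(E,F)$ denotes the compact operators $E\to F$ and $\mathcal A(E,F)$ the approximable operators, i.e. the operator-norm closure of the bounded finite-rank operators $E\to F$; $\mathcal A(E)=\mathcal A(E,E)$, $\mathcal K(E)=\mathcal K(E,E)$. For $m,n\ge0$, $P_m:Z_p\to X_m$ and $J_n:X_n\to Z_p$ denote the natural coordinate projections and inclusions of the $\ell^p$-direct sum. A Banach algebra isomorphism is a bijective bounded algebra homomorphism (with bounded inverse). *)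

theory Defs
  imports "HOL-Analysis.Analysis"
begin

definition finite_rank :: "('a::real_normed_vector \<Rightarrow> 'b::real_normed_vector) \<Rightarrow> bool" where
  "finite_rank F \<longleftrightarrow> (\<exists>B. finite B \<and> range F \<subseteq> span B)"

definition approximable :: "('a::real_normed_vector \<Rightarrow> 'b::real_normed_vector) \<Rightarrow> bool" where
  "approximable T \<longleftrightarrow> bounded_linear T \<and>
     (\<forall>e>0. \<exists>F. bounded_linear F \<and> finite_rank F \<and> onorm (\<lambda>x. T x - F x) < e)"

definition compact_op :: "('a::real_normed_vector \<Rightarrow> 'b::real_normed_vector) \<Rightarrow> bool" where
  "compact_op T \<longleftrightarrow> bounded_linear T \<and> compact (closure (T ` cball 0 1))"

definition approximation_property :: "'a::real_normed_vector itself \<Rightarrow> bool" where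
  "approximation_property _ \<longleftrightarrow>
     (\<forall>K::'a set. compact K \<longrightarrow> (\<forall>e>0. \<exists>F::'a \<Rightarrow> 'a. bounded_linear F \<and> finite_rank F \<and>
        (\<forall>x\<in>K. norm (F x - x) < e)))"

definition lp_seq :: "real \<Rightarrow> (nat \<Rightarrow> 'a::real_normed_vector) set" where
  "lp_seq p = {f. summable (\<lambda>n. norm (f n) powr p)}"

definition lp_norm :: "real \<Rightarrow> (nat \<Rightarrow> 'a::real_normed_vector) \<Rightarrow> real" where
  "lp_norm p f = (\<Sum>n. norm (f n) powr p) powr (1/p)"

definition lp_sum_iso :: "real \<Rightarrow> 'a::real_normed_vector itself \<Rightarrow> bool" where
  "lp_sum_iso p _ \<longleftrightarrow> (\<exists>T :: (nat \<Rightarrow> 'a) \<Rightarrow> 'a.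
      bij_betw T (lp_seq p) UNIV \<and>
      (\<forall>f\<in>lp_seq p. \<forall>g\<in>lp_seq p. T (\<lambda>n. f n + g n) = T f + T g) \<and>
      (\<forall>c. \<forall>f\<in>lp_seq p. T (\<lambda>n. c *\<^sub>R f n) = c *\<^sub>R T f) \<and>
      (\<exists>c C. 0 < c \<and> 0 < C \<and>
         (\<forall>f\<in>lp_seq p. c * lp_norm p f \<le> norm (T f) \<and> norm (T f) \<le> C * lp_norm p f)))"

text \<open>An element of Z_p is a pair (y, f): y is the coordinate in X_0 = Y and f j
  (j >= 1) the coordinate in X_j = X; the dummy value f 0 is required to be 0.\<close>
type_synonym ('a, 'b) zpt = "'b \<times> (nat \<Rightarrow> 'a)"

definition Zp :: "real \<Rightarrow> ('a::real_normed_vector, 'b::real_normed_vector) zpt set" where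
  "Zp p = {(y, f). f 0 = 0 \<and> summable (\<lambda>n. norm (f n) powr p)}"

definition znorm :: "real \<Rightarrow> ('a::real_normed_vector, 'b::real_normed_vector) zpt \<Rightarrow> real" where
  "znorm p z = (norm (fst z) powr p + (\<Sum>n. norm (snd z n) powr p)) powr (1/p)"

definition zzero :: "('a::real_normed_vector, 'b::real_normed_vector) zpt" where
  "zzero = (0, \<lambda>_. 0)"

definition zadd :: "('a::real_normed_vector, 'b::real_normed_vector) zpt \<Rightarrow> ('a, 'b) zpt \<Rightarrow> ('a, 'b) zpt" where
  "zadd z w = (fst z + fst w, \<lambda>n. snd z n + snd w n)"

definition zscale :: "real \<Rightarrow> ('a::real_normed_vector, 'b::real_normed_vector) zpt \<Rightarrow> ('a, 'b) zpt" where
  "zscale c z = (c *\<^sub>R fst z, \<lambda>n. c *\<^sub>R snd z n)"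

definition zsub :: "('a::real_normed_vector, 'b::real_normed_vector) zpt \<Rightarrow> ('a, 'b) zpt \<Rightarrow> ('a, 'b) zpt" where
  "zsub z w = zadd z (zscale (-1) w)"

definition zoperator :: "real \<Rightarrow> (('a::real_normed_vector, 'b::real_normed_vector) zpt \<Rightarrow> ('a, 'b) zpt) \<Rightarrow> bool" where
  "zoperator p S \<longleftrightarrow>
     (\<forall>z\<in>Zp p. S z \<in> Zp p) \<and> (\<forall>z. z \<notin> Zp p \<longrightarrow> S z = zzero) \<and>
     (\<forall>z\<in>Zp p. \<forall>w\<in>Zp p. S (zadd z w) = zadd (S z) (S w)) \<and>
     (\<forall>c. \<forall>z\<in>Zp p. S (zscale c z) = zscale c (S z)) \<and>
     (\<exists>K. \<forall>z\<in>Zp p. znorm p (S z) \<le> K * znorm p z)"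

definition zcompact_op :: "real \<Rightarrow> (('a::real_normed_vector, 'b::real_normed_vector) zpt \<Rightarrow> ('a, 'b) zpt) \<Rightarrow> bool" where
  "zcompact_op p S \<longleftrightarrow> zoperator p S \<and>
     (\<forall>x::nat \<Rightarrow> ('a,'b) zpt. (\<forall>n. x n \<in> Zp p \<and> znorm p (x n) \<le> 1) \<longrightarrow>
        (\<exists>(r::nat \<Rightarrow> nat) w. strict_mono r \<and> w \<in> Zp p \<and> (\<lambda>n. znorm p (zsub (S (x (r n))) w)) \<longlonglongrightarrow> 0))"

definition zopnorm :: "real \<Rightarrow> (('a::real_normed_vector, 'b::real_normed_vector) zpt \<Rightarrow> ('a, 'b) zpt) \<Rightarrow> real" where
  "zopnorm p S = Sup {znorm p (S z) | z. z \<in> Zp p \<and> znorm p z \<le> 1}"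

definition P0SJ0 :: "(('a::real_normed_vector, 'b::real_normed_vector) zpt \<Rightarrow> ('a, 'b) zpt) \<Rightarrow> 'b \<Rightarrow> 'b" where
  "P0SJ0 S = (\<lambda>y. fst (S (y, \<lambda>_. 0)))"

definition P0SJk :: "(('a::real_normed_vector, 'b::real_normed_vector) zpt \<Rightarrow> ('a, 'b) zpt) \<Rightarrow> nat \<Rightarrow> 'a \<Rightarrow> 'b" where
  "P0SJk S k = (\<lambda>x. fst (S (0, (\<lambda>_. 0)(k := x))))"

definition IA :: "real \<Rightarrow> nat set \<Rightarrow> (('a::real_normed_vector, 'b::real_normed_vector) zpt \<Rightarrow> ('a, 'b) zpt) set" where
  "IA p A = {S. zcompact_op p S \<and> approximable (P0SJ0 S) \<and> (\<forall>k\<in>A. approximable (P0SJk S k))}"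

definition banach_alg_iso :: "real \<Rightarrow>
    ((('a::real_normed_vector, 'b::real_normed_vector) zpt \<Rightarrow> ('a, 'b) zpt) \<Rightarrow> (('a, 'b) zpt \<Rightarrow> ('a, 'b) zpt)) \<Rightarrow>
    (('a, 'b) zpt \<Rightarrow> ('a, 'b) zpt) set \<Rightarrow> (('a, 'b) zpt \<Rightarrow> ('a, 'b) zpt) set \<Rightarrow> bool" where
  "banach_alg_iso p \<Phi> I J \<longleftrightarrow> bij_betw \<Phi> I J \<and>
     (\<forall>S\<in>I. \<forall>T\<in>I. \<Phi> (\<lambda>z. zadd (S z) (T z)) = (\<lambda>z. zadd (\<Phi> S z) (\<Phi> T z))) \<and>
     (\<forall>c. \<forall>S\<in>I. \<Phi> (\<lambda>z. zscale c (S z)) = (\<lambda>z. zscale c (\<Phi> S z))) \<and>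
     (\<forall>S\<in>I. \<forall>T\<in>I. \<Phi> (S \<circ> T) = \<Phi> S \<circ> \<Phi> T) \<and>
     (\<exists>C. \<forall>S\<in>I. zopnorm p (\<Phi> S) \<le> C * zopnorm p S) \<and>
     (\<exists>c>0. \<forall>S\<in>I. c * zopnorm p S \<le> zopnorm p (\<Phi> S))"

end

theory Submission
  imports Defs
begin

lemma finite_rank_comp:
  assumes "finite_rank F" shows "finite_rank (\<lambda>x. F (L x))"
  using assms unfolding finite_rank_def by blast

lemma finite_rank_add:
  assumes "finite_rank F" "finite_rank G" shows "finite_rank (\<lambda>x. F x + G x)"
proof -
  obtain B1 where B1: "finite B1" "range F \<subseteq> span B1" using assms(1) finite_rank_def by blast
  obtain B2 where B2: "finite B2" "range G \<subseteq> span B2" using assms(2) finite_rank_def by blast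
  have "range (\<lambda>x. F x + G x) \<subseteq> span (B1 \<union> B2)"
  proof
    fix y assume "y \<in> range (\<lambda>x. F x + G x)"
    then obtain x where y: "y = F x + G x" by blast
    have "F x \<in> span (B1 \<union> B2)" using B1 span_mono[of B1 "B1 \<union> B2"] by auto
    moreover have "G x \<in> span (B1 \<union> B2)" using B2 span_mono[of B2 "B1 \<union> B2"] by auto
    ultimately show "y \<in> span (B1 \<union> B2)" using y span_add by blast
  qed
  then show ?thesis unfolding finite_rank_def using B1 B2 by blast
qed

lemma finite_rank_zero: "finite_rank (\<lambda>x. 0)"
  unfolding finite_rank_def by (rule exI[of _ "{}"]) auto

lemma approximable_zero: "approximable (\<lambda>x::'a::real_normed_vector. 0::'b::real_normed_vector)"
  unfolding approximable_def
  by (auto intro!: exI[of _ "\<lambda>x. 0"] simp: finite_rank_zero onorm_zero)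

lemma approximable_comp:
  assumes T: "approximable T" and L: "bounded_linear L"
  shows "approximable (\<lambda>x. T (L x))"
proof -
  have bT: "bounded_linear T" using T approximable_def by blast
  have "\<exists>F. bounded_linear F \<and> finite_rank F \<and> onorm (\<lambda>x. T (L x) - F x) < e" if e: "e > 0" for e
  proof -
    define d where "d = e / (onorm L + 1)"
    have onL: "onorm L \<ge> 0" using onorm_pos_le[OF L] .
    have d: "d > 0" using e onL by (simp add: d_def)
    obtain F where F: "bounded_linear F" "finite_rank F" "onorm (\<lambda>x. T x - F x) < d"
      using T d unfolding approximable_def by blast
    have bTF: "bounded_linear (\<lambda>x. T x - F x)" using bT F(1) bounded_linear_sub by blast
    have "onorm ((\<lambda>x. T x - F x) \<circ> L) \<le> onorm (\<lambda>x. T x - F x) * onorm L"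
      by (rule onorm_compose[OF bTF L])
    also have "\<dots> \<le> d * onorm L" using F(3) onL by (simp add: mult_right_mono)
    also have "\<dots> < e"
    proof -
      have "d * onorm L < d * (onorm L + 1)" using d by simp
      also have "\<dots> = e" using onL by (simp add: d_def)
      finally show ?thesis .
    qed
    finally have "onorm (\<lambda>x. T (L x) - F (L x)) < e" by (simp add: o_def)
    moreover have "bounded_linear (\<lambda>x. F (L x))"
      using bounded_linear_compose[OF F(1) L] by (simp add: o_def)
    moreover have "finite_rank (\<lambda>x. F (L x))" using finite_rank_comp F(2) by blast
    ultimately show ?thesis by blast
  qed
  moreover have "bounded_linear (\<lambda>x. T (L x))"
    using bounded_linear_compose[OF bT L] by (simp add: o_def)
  ultimately show ?thesis unfolding approximable_def by blast
qed

lemma approximable_add: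
  assumes S: "approximable S" and T: "approximable T"
  shows "approximable (\<lambda>x. S x + T x)"
proof -
  have bS: "bounded_linear S" and bT: "bounded_linear T" using S T approximable_def by blast+
  have "\<exists>F. bounded_linear F \<and> finite_rank F \<and> onorm (\<lambda>x. (S x + T x) - F x) < e" if e: "e > 0" for e
  proof -
    obtain F where F: "bounded_linear F" "finite_rank F" "onorm (\<lambda>x. S x - F x) < e/2"
      using S e unfolding approximable_def by (meson half_gt_zero)
    obtain G where G: "bounded_linear G" "finite_rank G" "onorm (\<lambda>x. T x - G x) < e/2"
      using T e unfolding approximable_def by (meson half_gt_zero)
    have b1: "bounded_linear (\<lambda>x. S x - F x)" using bS F(1) bounded_linear_sub by blast
    have b2: "bounded_linear (\<lambda>x. T x - G x)" using bT G(1) bounded_linear_sub by blast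
    have "onorm (\<lambda>x. (S x - F x) + (T x - G x)) < e"
      by (rule onorm_triangle_lt[OF b1 b2]) (use F(3) G(3) in simp)
    moreover have "(\<lambda>x. (S x - F x) + (T x - G x)) = (\<lambda>x. (S x + T x) - (F x + G x))"
      by (simp add: algebra_simps)
    ultimately show ?thesis
      using bounded_linear_add[OF F(1) G(1)] finite_rank_add[OF F(2) G(2)] by auto
  qed
  then show ?thesis unfolding approximable_def using bounded_linear_add[OF bS bT] by blast
qed

lemma approximable_sum:
  assumes "finite J" "\<And>j. j \<in> J \<Longrightarrow> approximable (F j)"
  shows "approximable (\<lambda>x. \<Sum>j\<in>J. F j x)"
  using assms
proof (induction J rule: finite_induct)
  case empty then show ?case using approximable_zero by simp
next
  case (insert a J)
  then show ?case using approximable_add[of "F a" "\<lambda>x. \<Sum>j\<in>J. F j x"] by simp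
qed

lemma approximable_limit:
  assumes bT: "bounded_linear T"
    and H: "\<And>e. e > 0 \<Longrightarrow> \<exists>G. approximable G \<and> onorm (\<lambda>x. T x - G x) < e"
  shows "approximable T"
proof -
  have "\<exists>F. bounded_linear F \<and> finite_rank F \<and> onorm (\<lambda>x. T x - F x) < e" if e: "e > 0" for e
  proof -
    obtain G where G: "approximable G" "onorm (\<lambda>x. T x - G x) < e/2" using H e by (meson half_gt_zero)
    have bG: "bounded_linear G" using G(1) approximable_def by blast
    obtain F where F: "bounded_linear F" "finite_rank F" "onorm (\<lambda>x. G x - F x) < e/2"
      using G(1) e unfolding approximable_def by (meson half_gt_zero)
    have b1: "bounded_linear (\<lambda>x. T x - G x)" using bT bG bounded_linear_sub by blast
    have b2: "bounded_linear (\<lambda>x. G x - F x)" using bG F(1) bounded_linear_sub by blast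
    have "onorm (\<lambda>x. (T x - G x) + (G x - F x)) < e"
      by (rule onorm_triangle_lt[OF b1 b2]) (use F(3) G(2) in simp)
    then show ?thesis using F by auto
  qed
  then show ?thesis unfolding approximable_def using bT by blast
qed


lemma powr_add_le:
  fixes a b p :: real
  assumes "a \<ge> 0" "b \<ge> 0" "p > 0"
  shows "(a + b) powr p \<le> 2 powr p * (a powr p + b powr p)"
proof -
  have "a + b \<le> 2 * max a b" by simp
  hence "(a + b) powr p \<le> (2 * max a b) powr p"
    using assms by (intro powr_mono2) auto
  also have "\<dots> = 2 powr p * max a b powr p" using assms by (simp add: powr_mult)
  also have "max a b powr p \<le> a powr p + b powr p"
    by (cases "a \<le> b") (auto simp: max_def)
  hence "2 powr p * max a b powr p \<le> 2 powr p * (a powr p + b powr p)" by simp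
  finally show ?thesis .
qed

lemma summable_powr_add:
  fixes f g :: "nat \<Rightarrow> 'a::real_normed_vector"
  assumes "summable (\<lambda>n. norm (f n) powr p)" "summable (\<lambda>n. norm (g n) powr p)" "p > 0"
  shows "summable (\<lambda>n. norm (f n + g n) powr p)"
proof (rule summable_comparison_test'[where g="\<lambda>n. 2 powr p * (norm (f n) powr p + norm (g n) powr p)"])
  show "summable (\<lambda>n. 2 powr p * (norm (f n) powr p + norm (g n) powr p))"
    using assms by (intro summable_mult summable_add) auto
  fix n
  have "norm (f n + g n) powr p \<le> (norm (f n) + norm (g n)) powr p"
    using assms(3) by (intro powr_mono2) (auto simp: norm_triangle_ineq)
  also have "\<dots> \<le> 2 powr p * (norm (f n) powr p + norm (g n) powr p)"
    using assms(3) by (intro powr_add_le) auto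
  finally show "norm (norm (f n + g n) powr p) \<le> 2 powr p * (norm (f n) powr p + norm (g n) powr p)"
    by simp
qed

lemma summable_powr_scale:
  fixes f :: "nat \<Rightarrow> 'a::real_normed_vector"
  assumes "summable (\<lambda>n. norm (f n) powr p)" "p > 0"
  shows "summable (\<lambda>n. norm (c *\<^sub>R f n) powr p)"
proof -
  have "(\<lambda>n. norm (c *\<^sub>R f n) powr p) = (\<lambda>n. \<bar>c\<bar> powr p * norm (f n) powr p)"
    by (simp add: powr_mult)
  then show ?thesis using assms summable_mult by auto
qed

lemma Zp_iff: "z \<in> Zp p \<longleftrightarrow> snd z 0 = 0 \<and> summable (\<lambda>n. norm (snd z n) powr p)"
  by (cases z) (simp add: Zp_def)

lemma zzero_Zp[simp]: "zzero \<in> Zp p"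
  by (simp add: Zp_iff zzero_def)

lemma Zp_zadd: "z \<in> Zp p \<Longrightarrow> w \<in> Zp p \<Longrightarrow> p > 0 \<Longrightarrow> zadd z w \<in> Zp p"
  by (simp add: Zp_iff zadd_def summable_powr_add)

lemma Zp_zscale: "z \<in> Zp p \<Longrightarrow> p > 0 \<Longrightarrow> zscale c z \<in> Zp p"
  using summable_powr_scale[of "snd z" p c] by (simp add: Zp_iff zscale_def del: norm_scaleR)

lemma Zp_zsub: "z \<in> Zp p \<Longrightarrow> w \<in> Zp p \<Longrightarrow> p > 0 \<Longrightarrow> zsub z w \<in> Zp p"
  by (simp add: zsub_def Zp_zadd Zp_zscale)

lemma znorm_nonneg: "znorm p z \<ge> 0"
  by (simp add: znorm_def)

lemma snd_sum_nonneg: "z \<in> Zp p \<Longrightarrow> (\<Sum>n. norm (snd z n) powr p) \<ge> 0"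
  by (simp add: Zp_iff suminf_nonneg)

lemma norm_fst_le_znorm:
  assumes "z \<in> Zp p" "p > 0"
  shows "norm (fst z) \<le> znorm p z"
proof -
  have "norm (fst z) = (norm (fst z) powr p) powr (1/p)" using assms by (simp add: powr_powr)
  also have "\<dots> \<le> znorm p z" unfolding znorm_def
    using snd_sum_nonneg[OF assms(1)] assms by (intro powr_mono2) auto
  finally show ?thesis .
qed

lemma norm_snd_le_znorm:
  assumes "z \<in> Zp p" "p > 0"
  shows "norm (snd z j) \<le> znorm p z"
proof -
  have s: "summable (\<lambda>n. norm (snd z n) powr p)" using assms Zp_iff by blast
  have "norm (snd z j) powr p \<le> (\<Sum>n\<in>{..<Suc j}. norm (snd z n) powr p)"
    by (rule member_le_sum) auto
  also have "\<dots> \<le> (\<Sum>n. norm (snd z n) powr p)" using s by (intro sum_le_suminf) auto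
  finally have le: "norm (snd z j) powr p \<le> (\<Sum>n. norm (snd z n) powr p)" .
  have "norm (snd z j) = (norm (snd z j) powr p) powr (1/p)" using assms by (simp add: powr_powr)
  also have "\<dots> \<le> znorm p z" unfolding znorm_def
    using le assms by (intro powr_mono2) (auto simp: add_increasing)
  finally show ?thesis .
qed

lemma znorm_zscale:
  assumes "z \<in> Zp p" "p > 0"
  shows "znorm p (zscale c z) = \<bar>c\<bar> * znorm p z"
proof -
  have s: "summable (\<lambda>n. norm (snd z n) powr p)" using assms Zp_iff by blast
  have "(\<Sum>n. norm (c *\<^sub>R snd z n) powr p) = (\<Sum>n. \<bar>c\<bar> powr p * norm (snd z n) powr p)"
    by (simp add: powr_mult)
  also have "\<dots> = \<bar>c\<bar> powr p * (\<Sum>n. norm (snd z n) powr p)" using s by (rule suminf_mult)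
  finally have e: "(\<Sum>n. norm (c *\<^sub>R snd z n) powr p) = \<bar>c\<bar> powr p * (\<Sum>n. norm (snd z n) powr p)" .
  have "znorm p (zscale c z) = (\<bar>c\<bar> powr p * (norm (fst z) powr p + (\<Sum>n. norm (snd z n) powr p))) powr (1/p)"
    unfolding znorm_def zscale_def using e by (simp add: powr_mult algebra_simps)
  also have "\<dots> = (\<bar>c\<bar> powr p) powr (1/p) * znorm p z"
    unfolding znorm_def using snd_sum_nonneg[OF assms(1)] by (subst powr_mult) auto
  also have "(\<bar>c\<bar> powr p) powr (1/p) = \<bar>c\<bar>" using assms by (simp add: powr_powr)
  finally show ?thesis .
qed

lemma znorm_mono:
  assumes "w \<in> Zp p" "p > 0" "norm (fst z) \<le> norm (fst w)" "\<And>j. norm (snd z j) \<le> norm (snd w j)"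
  shows "znorm p z \<le> znorm p w"
proof -
  have s: "summable (\<lambda>n. norm (snd w n) powr p)" using assms Zp_iff by blast
  have s2: "summable (\<lambda>n. norm (snd z n) powr p)"
    by (rule summable_comparison_test'[OF s]) (use assms in \<open>auto intro: powr_mono2\<close>)
  have "(\<Sum>n. norm (snd z n) powr p) \<le> (\<Sum>n. norm (snd w n) powr p)"
    using s s2 assms by (intro suminf_le) (auto intro: powr_mono2)
  moreover have "norm (fst z) powr p \<le> norm (fst w) powr p" using assms by (auto intro: powr_mono2)
  moreover have "(\<Sum>n. norm (snd z n) powr p) \<ge> 0" using s2 by (simp add: suminf_nonneg)
  ultimately show ?thesis unfolding znorm_def using assms
    by (intro powr_mono2) auto
qed

lemma zscale_zero[simp]: "zscale 0 z = zzero"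
  by (simp add: zscale_def zzero_def)

lemma zoperator_zero:
  assumes "zoperator p S" "p > 0"
  shows "S zzero = zzero"
proof -
  have "S zzero = S (zscale 0 zzero)" by simp
  also have "\<dots> = zscale 0 (S zzero)" using assms unfolding zoperator_def
    by (metis zzero_Zp)
  finally show ?thesis by simp
qed

lemma zoperator_bound:
  assumes "zoperator p S"
  obtains K where "K \<ge> 0" "\<And>z. z \<in> Zp p \<Longrightarrow> znorm p (S z) \<le> K * znorm p z"
proof -
  obtain K where K: "\<And>z. z \<in> Zp p \<Longrightarrow> znorm p (S z) \<le> K * znorm p z"
    using assms unfolding zoperator_def by blast
  have "znorm p (S z) \<le> max K 0 * znorm p z" if "z \<in> Zp p" for z
    using K[OF that] znorm_nonneg[of p z] by (smt (verit) mult_right_mono max.cobounded1)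
  then show ?thesis using that[of "max K 0"] by auto
qed

lemma zoperator_in: "zoperator p S \<Longrightarrow> z \<in> Zp p \<Longrightarrow> S z \<in> Zp p"
  unfolding zoperator_def by blast

lemma zoperator_out: "zoperator p S \<Longrightarrow> z \<notin> Zp p \<Longrightarrow> S z = zzero"
  unfolding zoperator_def by blast

lemma zoperator_add: "zoperator p S \<Longrightarrow> z \<in> Zp p \<Longrightarrow> w \<in> Zp p \<Longrightarrow> S (zadd z w) = zadd (S z) (S w)"
  unfolding zoperator_def by blast

lemma zoperator_scale: "zoperator p S \<Longrightarrow> z \<in> Zp p \<Longrightarrow> S (zscale c z) = zscale c (S z)"
  unfolding zoperator_def by blast

lemma zoperator_sub: "zoperator p S \<Longrightarrow> z \<in> Zp p \<Longrightarrow> w \<in> Zp p \<Longrightarrow> p > 0 \<Longrightarrow> S (zsub z w) = zsub (S z) (S w)"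
  unfolding zsub_def by (simp add: zoperator_add zoperator_scale Zp_zscale)

lemma fst_zsub[simp]: "fst (zsub z w) = fst z - fst w"
  by (simp add: zsub_def zadd_def zscale_def)

lemma snd_zsub[simp]: "snd (zsub z w) = (\<lambda>n. snd z n - snd w n)"
  by (simp add: zsub_def zadd_def zscale_def)

lemma fst_zadd[simp]: "fst (zadd z w) = fst z + fst w"
  by (simp add: zadd_def)

lemma snd_zadd[simp]: "snd (zadd z w) = (\<lambda>n. snd z n + snd w n)"
  by (simp add: zadd_def)

lemma fst_zscale[simp]: "fst (zscale c z) = c *\<^sub>R fst z"
  by (simp add: zscale_def)

lemma snd_zscale[simp]: "snd (zscale c z) = (\<lambda>n. c *\<^sub>R snd z n)"
  by (simp add: zscale_def)

lemma zscale_zsub: "zscale c (zsub a b) = zsub (zscale c a) (zscale c b)"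
  by (simp add: zsub_def zadd_def zscale_def algebra_simps)


lemma Zp_dom:
  assumes "w \<in> Zp p" "snd z 0 = 0" "\<And>j. norm (snd z j) \<le> norm (snd w j)" "p > 0"
  shows "z \<in> Zp p"
proof -
  have s: "summable (\<lambda>n. norm (snd w n) powr p)" using assms Zp_iff by blast
  have "summable (\<lambda>n. norm (snd z n) powr p)"
    by (rule summable_comparison_test'[OF s]) (use assms in \<open>auto intro: powr_mono2\<close>)
  then show ?thesis using assms Zp_iff by blast
qed

lemma tail_small:
  assumes s: "summable (\<lambda>n. norm (f n) powr p)" and d: "d > 0" and p: "p > 0"
  shows "\<exists>N0. \<forall>M\<ge>N0. znorm p (0::'b::real_normed_vector, \<lambda>j. if j \<le> M then 0 else (f j :: 'a::real_normed_vector)) < d"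
proof -
  define g where "g = (\<lambda>n. norm (f n) powr p)"
  have r: "d powr p > 0" using d by simp
  obtain N0 where N0: "\<And>n. n \<ge> N0 \<Longrightarrow> norm (\<Sum>i. g (i + n)) < d powr p"
    using suminf_exist_split[OF r s[folded g_def]] by blast
  have "znorm p (0::'b, \<lambda>j. if j \<le> M then 0 else f j) < d" if M: "M \<ge> N0" for M
  proof -
    define h where "h = (\<lambda>j. if j \<le> M then 0 else g j)"
    have hE: "(\<lambda>j. norm (if j \<le> M then 0 else f j) powr p) = h"
      by (auto simp: h_def g_def fun_eq_iff)
    have sh: "summable h"
      by (rule summable_comparison_test'[OF s[folded g_def]]) (auto simp: h_def g_def)
    have "suminf h = (\<Sum>n. h (n + Suc M)) + (\<Sum>i<Suc M. h i)"
      using suminf_split_initial_segment[OF sh] .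
    also have "(\<Sum>i<Suc M. h i) = 0" by (auto simp: h_def intro!: sum.neutral)
    also have "(\<Sum>n. h (n + Suc M)) = (\<Sum>n. g (n + Suc M))" by (simp add: h_def)
    finally have hs: "suminf h = (\<Sum>n. g (n + Suc M))" by simp
    have "suminf h < d powr p" using N0[of "Suc M"] M hs by simp
    moreover have "suminf h \<ge> 0" using sh by (intro suminf_nonneg) (auto simp: h_def g_def)
    ultimately have "(suminf h) powr (1/p) < (d powr p) powr (1/p)"
      using p by (intro powr_less_mono2) auto
    also have "\<dots> = d" using p d by (simp add: powr_powr)
    finally show ?thesis unfolding znorm_def using hE p by simp
  qed
  then show ?thesis by blast
qed

lemma disjoint_sum_powr:
  fixes g :: "nat \<Rightarrow> 'a::real_normed_vector"
  assumes "finite I" "\<And>i i'. i \<in> I \<Longrightarrow> i' \<in> I \<Longrightarrow> i \<noteq> i' \<Longrightarrow> g i = 0 \<or> g i' = 0" "p > 0"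
  shows "norm (\<Sum>i\<in>I. g i) powr p = (\<Sum>i\<in>I. norm (g i) powr p)"
proof (cases "\<exists>i0\<in>I. g i0 \<noteq> 0")
  case False
  then show ?thesis by simp
next
  case True
  then obtain i0 where i0: "i0 \<in> I" "g i0 \<noteq> 0" by blast
  have z: "\<And>i. i \<in> I - {i0} \<Longrightarrow> g i = 0" using assms(2) i0 by blast
  have "(\<Sum>i\<in>I. g i) = g i0 + (\<Sum>i\<in>I - {i0}. g i)" using sum.remove[OF assms(1) i0(1)] .
  also have "(\<Sum>i\<in>I - {i0}. g i) = 0" using z by simp
  finally have e1: "(\<Sum>i\<in>I. g i) = g i0" by simp
  have "(\<Sum>i\<in>I. norm (g i) powr p) = norm (g i0) powr p + (\<Sum>i\<in>I - {i0}. norm (g i) powr p)"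
    using sum.remove[OF assms(1) i0(1)] .
  also have "(\<Sum>i\<in>I - {i0}. norm (g i) powr p) = 0" using z by simp
  finally show ?thesis using e1 by simp
qed

lemma S_sum:
  fixes S :: "('a::real_normed_vector, 'b::real_normed_vector) zpt \<Rightarrow> ('a, 'b) zpt"
  assumes S: "zoperator p S" and p: "p > 0" and I: "finite I"
    and z: "\<And>i. i \<in> I \<Longrightarrow> z i \<in> Zp p \<and> fst (z i) = 0"
  shows "(0::'b, \<lambda>j. \<Sum>i\<in>I. snd (z i) j) \<in> Zp p \<and> fst (S (0, \<lambda>j. \<Sum>i\<in>I. snd (z i) j)) = (\<Sum>i\<in>I. fst (S (z i)))"
  using I z
proof (induction I rule: finite_induct)
  case empty
  have "(0::'b, \<lambda>j. \<Sum>i\<in>{}. snd (z i) j) = zzero" by (simp add: zzero_def)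
  then show ?case using zoperator_zero[OF S p] zzero_Zp[of p] by (simp add: zzero_def)
next
  case (insert a I)
  have za: "z a \<in> Zp p" "fst (z a) = 0" using insert by auto
  have IH: "(0::'b, \<lambda>j. \<Sum>i\<in>I. snd (z i) j) \<in> Zp p \<and> fst (S (0, \<lambda>j. \<Sum>i\<in>I. snd (z i) j)) = (\<Sum>i\<in>I. fst (S (z i)))"
    using insert by auto
  have eq: "(0::'b, \<lambda>j. \<Sum>i\<in>insert a I. snd (z i) j) = zadd (z a) (0, \<lambda>j. \<Sum>i\<in>I. snd (z i) j)"
    using insert(1,2) za(2) by (simp add: zadd_def)
  show ?case unfolding eq
    using Zp_zadd[OF za(1) conjunct1[OF IH] p] zoperator_add[OF S za(1) conjunct1[OF IH]] IH insert(1,2)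
    by simp
qed

lemma znorm_disjoint_sum:
  fixes z :: "nat \<Rightarrow> ('a::real_normed_vector, 'b::real_normed_vector) zpt"
  assumes p: "p > 0" and I: "finite I"
    and z: "\<And>i. i \<in> I \<Longrightarrow> z i \<in> Zp p \<and> fst (z i) = 0 \<and> znorm p (z i) \<le> 1"
    and dis: "\<And>i i' j. i \<in> I \<Longrightarrow> i' \<in> I \<Longrightarrow> i \<noteq> i' \<Longrightarrow> snd (z i) j = 0 \<or> snd (z i') j = 0"
  shows "znorm p (0::'b, \<lambda>j. \<Sum>i\<in>I. snd (z i) j) \<le> real (card I) powr (1/p)"
proof -
  have sm: "summable (\<lambda>j. norm (snd (z i) j) powr p)" if "i \<in> I" for i
    using z[OF that] Zp_iff by blast
  have pw: "norm (\<Sum>i\<in>I. snd (z i) j) powr p = (\<Sum>i\<in>I. norm (snd (z i) j) powr p)" for j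
    by (rule disjoint_sum_powr[OF I _ p]) (use dis in blast)
  have tot: "(\<Sum>j. norm (\<Sum>i\<in>I. snd (z i) j) powr p) = (\<Sum>i\<in>I. \<Sum>j. norm (snd (z i) j) powr p)"
    unfolding pw by (rule suminf_sum) (use sm in blast)
  have le1: "(\<Sum>j. norm (snd (z i) j) powr p) \<le> 1" if i: "i \<in> I" for i
  proof -
    define s where "s = (\<Sum>j. norm (snd (z i) j) powr p)"
    have s0: "s \<ge> 0" unfolding s_def using sm[OF i] by (intro suminf_nonneg) auto
    have "znorm p (z i) = s powr (1/p)" unfolding znorm_def s_def using z[OF i] p by simp
    then have "s powr (1/p) \<le> 1" using z[OF i] by simp
    show ?thesis
    proof (rule ccontr)
      assume "\<not> ?thesis"
      then have "1 < s" unfolding s_def by simp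
      then have "1 powr (1/p) < s powr (1/p)" using p by (intro powr_less_mono2) auto
      then show False using \<open>s powr (1/p) \<le> 1\<close> by simp
    qed
  qed
  have "(\<Sum>i\<in>I. \<Sum>j. norm (snd (z i) j) powr p) \<le> (\<Sum>i\<in>I. 1)" using le1 by (intro sum_mono) auto
  then have "(\<Sum>j. norm (\<Sum>i\<in>I. snd (z i) j) powr p) \<le> real (card I)" using tot by simp
  moreover have "(\<Sum>j. norm (\<Sum>i\<in>I. snd (z i) j) powr p) \<ge> 0"
    unfolding tot using sm by (intro sum_nonneg suminf_nonneg) auto
  ultimately show ?thesis unfolding znorm_def using p by (simp add: powr_mono2)
qed

lemma growth:
  fixes p e K :: real
  assumes p: "p > 1" and e: "e > 0" and K: "K \<ge> 0"
  shows "\<exists>m::nat. m \<ge> 1 \<and> K * real m powr (1/p) < real m * e / 2"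
proof -
  define a where "a = 2 * K / e + 1"
  have "2 * K / e \<ge> 0" using K e by simp
  then have a: "a > 0" by (simp add: a_def)
  obtain m :: nat where m: "real m > a powr (p / (p - 1)) + 1" using reals_Archimedean2 by blast
  have m1: "m \<ge> 1"
  proof -
    have "a powr (p / (p - 1)) \<ge> 0" by simp
    then have "real m > 1" using m by linarith
    then show ?thesis by simp
  qed
  have q: "(p - 1) / p > 0" using p by simp
  have "a = (a powr (p / (p - 1))) powr ((p - 1) / p)" using p a by (simp add: powr_powr)
  also have "\<dots> < real m powr ((p - 1) / p)"
    using m q by (intro powr_less_mono2) auto
  finally have am: "a < real m powr ((p - 1) / p)" .
  have mp: "real m powr (1/p) > 0" using m1 by simp
  have split: "real m = real m powr (1/p) * real m powr ((p - 1) / p)"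
  proof -
    have "real m powr (1/p) * real m powr ((p - 1) / p) = real m powr (1/p + (p - 1) / p)"
      by (simp add: powr_add)
    also have "1/p + (p - 1)/p = 1" using p by (simp add: field_simps)
    finally show ?thesis using m1 by simp
  qed
  have "K * real m powr (1/p) < (e/2) * (real m powr (1/p) * a)"
    using mp e by (simp add: a_def field_simps)
  also have "\<dots> \<le> (e/2) * (real m powr (1/p) * real m powr ((p - 1) / p))"
    using am mp e by (intro mult_left_mono) auto
  also have "\<dots> = real m * e / 2" using split by simp
  finally show ?thesis using m1 by blast
qed


lemma tail_lemma:
  fixes S :: "('a::real_normed_vector, 'b::real_normed_vector) zpt \<Rightarrow> ('a, 'b) zpt"
  assumes p: "p > 1" and Sc: "zcompact_op p S" and e: "e > 0"
  shows "\<exists>N. \<forall>z\<in>Zp p. fst z = 0 \<longrightarrow> (\<forall>j\<le>N. snd z j = 0) \<longrightarrow> norm (fst (S z)) \<le> e * znorm p z"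
proof (rule ccontr)
  assume H: "\<not> ?thesis"
  have p0: "p > 0" using p by simp
  have Sop: "zoperator p S" using Sc zcompact_op_def by blast
  obtain K where K: "K \<ge> 0" "\<And>z. z \<in> Zp p \<Longrightarrow> znorm p (S z) \<le> K * znorm p z"
    using zoperator_bound[OF Sop] by blast
  have H': "\<exists>z. z \<in> Zp p \<and> fst z = 0 \<and> (\<forall>j\<le>N. snd z j = 0) \<and> e * znorm p z < norm (fst (S z))" for N
    using H by (metis not_le)
  have step1: "\<exists>v M. N < M \<and> v \<in> Zp p \<and> fst v = 0 \<and> (\<forall>j. snd v j \<noteq> 0 \<longrightarrow> N < j \<and> j \<le> M)
      \<and> znorm p v \<le> 1 \<and> e < norm (fst (S v))" for N
  proof -
    obtain z where z: "z \<in> Zp p" "fst z = 0" "\<forall>j\<le>N. snd z j = 0" "e * znorm p z < norm (fst (S z))"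
      using H' by blast
    define r where "r = znorm p z"
    have r: "r > 0"
    proof (rule ccontr)
      assume "\<not> r > 0"
      then have r0: "r = 0" using znorm_nonneg[of p z] r_def by simp
      have "norm (fst (S z)) \<le> znorm p (S z)" using norm_fst_le_znorm[OF zoperator_in[OF Sop z(1)] p0] .
      also have "\<dots> \<le> K * r" using K z(1) r_def by simp
      finally show False using z(4) r0 r_def by simp
    qed
    define z' where "z' = zscale (1/r) z"
    have z'in: "z' \<in> Zp p" unfolding z'_def using Zp_zscale[OF z(1) p0] .
    have z'n: "znorm p z' = 1" unfolding z'_def using znorm_zscale[OF z(1) p0] r r_def by simp
    have z'f: "fst z' = 0" unfolding z'_def using z(2) by simp
    have z's: "\<forall>j\<le>N. snd z' j = 0" unfolding z'_def using z(3) by simp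
    have Sz': "norm (fst (S z')) = norm (fst (S z)) / r"
      unfolding z'_def zoperator_scale[OF Sop z(1)] using r by simp
    have big: "norm (fst (S z')) > e" unfolding Sz' using z(4) r r_def by (simp add: field_simps)
    define d where "d = norm (fst (S z')) - e"
    have d: "d > 0" using big d_def by simp
    define \<delta> where "\<delta> = d / (K + 1)"
    have \<delta>: "\<delta> > 0" using d K by (simp add: \<delta>_def)
    have Kd: "K * \<delta> < d"
    proof -
      have "K * \<delta> < (K + 1) * \<delta>" using \<delta> by simp
      also have "\<dots> = d" using K by (simp add: \<delta>_def)
      finally show ?thesis .
    qed
    have sz': "summable (\<lambda>n. norm (snd z' n) powr p)" using z'in Zp_iff by blast
    obtain N0 where N0: "\<And>M. M \<ge> N0 \<Longrightarrow> znorm p (0::'b, \<lambda>j. if j \<le> M then 0 else snd z' j) < \<delta>"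
      using tail_small[OF sz' \<delta> p0] by blast
    define M where "M = max (Suc N) N0"
    define v where "v = (0::'b, \<lambda>j. if j \<le> M then snd z' j else 0)"
    define t where "t = (0::'b, \<lambda>j. if j \<le> M then 0 else snd z' j)"
    have z'0: "snd z' 0 = 0" using z'in Zp_iff by blast
    have vin: "v \<in> Zp p" unfolding v_def by (rule Zp_dom[OF z'in]) (auto simp: z'0 p0)
    have tin: "t \<in> Zp p" unfolding t_def by (rule Zp_dom[OF z'in]) (auto simp: z'0 p0)
    have vn: "znorm p v \<le> 1" unfolding v_def z'n[symmetric]
      by (rule znorm_mono[OF z'in p0]) (auto simp: z'f)
    have tsub: "zsub z' v = t" unfolding v_def t_def zsub_def zadd_def zscale_def
      using z'f by (auto simp: prod_eq_iff fun_eq_iff)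
    have tn: "znorm p t < \<delta>" unfolding t_def using N0[of M] by (simp add: M_def)
    have "norm (fst (S z') - fst (S v)) = norm (fst (S t))"
      using zoperator_sub[OF Sop z'in vin p0] tsub by simp
    also have "\<dots> \<le> znorm p (S t)" using norm_fst_le_znorm[OF zoperator_in[OF Sop tin] p0] .
    also have "\<dots> \<le> K * znorm p t" using K tin by blast
    also have "\<dots> \<le> K * \<delta>" using tn K by (intro mult_left_mono) auto
    finally have close: "norm (fst (S z') - fst (S v)) < d" using Kd by simp
    have "norm (fst (S z')) - norm (fst (S v)) \<le> norm (fst (S z') - fst (S v))"
      by (rule norm_triangle_ineq2)
    then have ev: "e < norm (fst (S v))" using close d_def by simp
    have supp: "\<forall>j. snd v j \<noteq> 0 \<longrightarrow> N < j \<and> j \<le> M"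
      using z's by (auto simp: v_def not_le split: if_splits)
    have "N < M" by (simp add: M_def)
    moreover have "fst v = 0" by (simp add: v_def)
    ultimately show ?thesis using vin supp vn ev by blast
  qed
  then have "\<forall>N. \<exists>y. fst y \<in> Zp p \<and> N < snd y \<and> fst (fst y) = 0 \<and>
      (\<forall>j. snd (fst y) j \<noteq> 0 \<longrightarrow> N < j \<and> j \<le> snd y) \<and> znorm p (fst y) \<le> 1 \<and> e < norm (fst (S (fst y)))"
    by (metis fst_conv snd_conv)
  then obtain F where F: "\<And>N. fst (F N) \<in> Zp p \<and> N < snd (F N) \<and> fst (fst (F N)) = 0 \<and>
      (\<forall>j. snd (fst (F N)) j \<noteq> 0 \<longrightarrow> N < j \<and> j \<le> snd (F N)) \<and> znorm p (fst (F N)) \<le> 1 \<and> e < norm (fst (S (fst (F N))))"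
    by metis
  define nb where "nb = rec_nat (0::nat) (\<lambda>_ n. snd (F n))"
  have nbS: "nb (Suc i) = snd (F (nb i))" for i by (simp add: nb_def)
  have nbm: "strict_mono nb" unfolding strict_mono_Suc_iff using F nbS by simp
  define x where "x = (\<lambda>i. fst (F (nb i)))"
  have xin: "x i \<in> Zp p" "fst (x i) = 0" "znorm p (x i) \<le> 1" "e < norm (fst (S (x i)))" for i
    unfolding x_def using F by auto
  have xsupp: "snd (x i) j \<noteq> 0 \<Longrightarrow> nb i < j \<and> j \<le> nb (Suc i)" for i j
    unfolding x_def nbS using F by blast
  obtain r w where rw: "strict_mono r" "w \<in> Zp p" "(\<lambda>n. znorm p (zsub (S (x (r n))) w)) \<longlonglongrightarrow> 0"
    using Sc xin unfolding zcompact_op_def by blast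
  have conv: "(\<lambda>n. norm (fst (S (x (r n))) - fst w)) \<longlonglongrightarrow> 0"
  proof (rule tendsto_sandwich[where f="\<lambda>_. 0" and h="\<lambda>n. znorm p (zsub (S (x (r n))) w)"])
    show "\<forall>\<^sub>F n in sequentially. norm (fst (S (x (r n))) - fst w) \<le> znorm p (zsub (S (x (r n))) w)"
      using norm_fst_le_znorm[OF Zp_zsub[OF zoperator_in[OF Sop xin(1)] rw(2) p0] p0] by simp
  qed (use rw(3) in auto)
  have "\<forall>\<^sub>F n in sequentially. norm (fst (S (x (r n))) - fst w) < e/4"
    using order_tendstoD(2)[OF conv, of "e/4"] e by simp
  then obtain i0 where i0: "\<And>i. i \<ge> i0 \<Longrightarrow> norm (fst (S (x (r i))) - fst w) < e/4"
    unfolding eventually_sequentially by blast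
  have fw: "norm (fst w) > 3 * e / 4"
  proof -
    have "norm (fst (S (x (r i0)))) \<le> norm (fst w) + norm (fst (S (x (r i0))) - fst w)"
      by (metis norm_triangle_sub add.commute)
    then show ?thesis using i0[of i0] xin(4)[of "r i0"] by simp
  qed
  obtain m :: nat where m: "m \<ge> 1" "K * real m powr (1/p) < real m * e / 2"
    using growth[OF p e K(1)] by blast
  define I where "I = {i0..<i0 + m}"
  have I: "finite I" "card I = m" by (auto simp: I_def)
  define zi where "zi = (\<lambda>i. x (r i))"
  have ziin: "\<And>i. i \<in> I \<Longrightarrow> zi i \<in> Zp p \<and> fst (zi i) = 0" unfolding zi_def using xin by blast
  have Ssum: "(0::'b, \<lambda>j. \<Sum>i\<in>I. snd (zi i) j) \<in> Zp p \<and>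
      fst (S (0, \<lambda>j. \<Sum>i\<in>I. snd (zi i) j)) = (\<Sum>i\<in>I. fst (S (zi i)))"
    by (rule S_sum[OF Sop p0 I(1) ziin])
  have dis: "snd (zi i) j = 0 \<or> snd (zi i') j = 0" if "i \<noteq> i'" for i i' j
  proof (rule ccontr)
    assume "\<not> ?thesis"
    then have a: "nb (r i) < j \<and> j \<le> nb (Suc (r i))" and b: "nb (r i') < j \<and> j \<le> nb (Suc (r i'))"
      using xsupp unfolding zi_def by blast+
    show False
    proof (cases "i < i'")
      case True
      then have "Suc (r i) \<le> r i'" using rw(1) strict_mono_less by (metis Suc_leI)
      then have "nb (Suc (r i)) \<le> nb (r i')" using nbm strict_mono_leD by blast
      then show False using a b by simp
    next
      case False
      then have "i' < i" using that by simp
      then have "Suc (r i') \<le> r i" using rw(1) strict_mono_less by (metis Suc_leI)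
      then have "nb (Suc (r i')) \<le> nb (r i)" using nbm strict_mono_leD by blast
      then show False using a b by simp
    qed
  qed
  have zn: "znorm p (0::'b, \<lambda>j. \<Sum>i\<in>I. snd (zi i) j) \<le> real m powr (1/p)"
    using znorm_disjoint_sum[OF p0 I(1), of zi] ziin dis xin(3) I(2) unfolding zi_def by auto
  have upper: "norm (\<Sum>i\<in>I. fst (S (zi i))) \<le> K * real m powr (1/p)"
  proof -
    have "norm (\<Sum>i\<in>I. fst (S (zi i))) = norm (fst (S (0, \<lambda>j. \<Sum>i\<in>I. snd (zi i) j)))" using Ssum by simp
    also have "\<dots> \<le> znorm p (S (0, \<lambda>j. \<Sum>i\<in>I. snd (zi i) j))"
      using norm_fst_le_znorm[OF zoperator_in[OF Sop conjunct1[OF Ssum]] p0] .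
    also have "\<dots> \<le> K * znorm p (0::'b, \<lambda>j. \<Sum>i\<in>I. snd (zi i) j)" using K conjunct1[OF Ssum] by blast
    also have "\<dots> \<le> K * real m powr (1/p)" using zn K by (intro mult_left_mono) auto
    finally show ?thesis .
  qed
  have lower: "norm (\<Sum>i\<in>I. fst (S (zi i))) \<ge> real m * e / 2"
  proof -
    define dd where "dd = (\<lambda>i. fst (S (zi i)) - fst w)"
    have sumeq: "(\<Sum>i\<in>I. fst (S (zi i))) = real m *\<^sub>R fst w + (\<Sum>i\<in>I. dd i)"
    proof -
      have "(\<Sum>i\<in>I. fst (S (zi i))) = (\<Sum>i\<in>I. fst w + dd i)" by (simp add: dd_def)
      also have "\<dots> = (\<Sum>i\<in>I. fst w) + (\<Sum>i\<in>I. dd i)" by (rule sum.distrib)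
      also have "(\<Sum>i\<in>I. fst w) = real m *\<^sub>R fst w" using I(2) sum_constant_scaleR[of "fst w" I] by simp
      finally show ?thesis .
    qed
    have "norm (\<Sum>i\<in>I. dd i) \<le> (\<Sum>i\<in>I. norm (dd i))" by (rule norm_sum)
    also have "\<dots> \<le> real (card I) * (e/4)"
      by (rule sum_bounded_above) (use i0 in \<open>auto simp: dd_def zi_def I_def less_imp_le\<close>)
    finally have dsm: "norm (\<Sum>i\<in>I. dd i) \<le> real m * (e/4)" using I(2) by simp
    have "norm (real m *\<^sub>R fst w) \<le> norm (\<Sum>i\<in>I. fst (S (zi i))) + norm (\<Sum>i\<in>I. dd i)"
      unfolding sumeq by (metis add_diff_cancel_right' norm_triangle_ineq4)
    moreover have "norm (real m *\<^sub>R fst w) = real m * norm (fst w)" by simp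
    moreover have "real m * norm (fst w) \<ge> real m * (3 * e / 4)"
      using fw by (intro mult_left_mono) auto
    ultimately show ?thesis using dsm by simp
  qed
  show False using upper lower m(2) by simp
qed


lemma trunc_decomp:
  fixes S :: "('a::real_normed_vector, 'b::real_normed_vector) zpt \<Rightarrow> ('a, 'b) zpt"
  assumes S: "zoperator p S" and p: "p > 0" and g: "(0, g) \<in> Zp p"
  shows "fst (S (0, g)) = (\<Sum>j\<in>{1..N}. fst (S (0, (\<lambda>_. 0)(j := g j))))
           + fst (S (0, \<lambda>j. if j \<le> N then 0 else g j))"
proof (induction N)
  case 0
  have g0: "g 0 = 0" using g by (simp add: Zp_def)
  have "(\<lambda>j. if j \<le> (0::nat) then 0 else g j) = g" using g0 by auto
  then show ?case by simp
next
  case (Suc N)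
  have g0: "g 0 = 0" using g by (simp add: Zp_def)
  have i1: "(0::'b, (\<lambda>_. 0)(Suc N := g (Suc N))) \<in> Zp p"
    by (rule Zp_dom[OF g]) (auto simp: g0 p)
  have i2: "(0::'b, \<lambda>j. if j \<le> Suc N then 0 else g j) \<in> Zp p"
    by (rule Zp_dom[OF g]) (auto simp: g0 p)
  have eq: "(0::'b, \<lambda>j. if j \<le> N then 0 else g j)
      = zadd (0, (\<lambda>_. 0)(Suc N := g (Suc N))) (0, \<lambda>j. if j \<le> Suc N then 0 else g j)"
    by (auto simp: zadd_def fun_eq_iff le_Suc_eq)
  have "fst (S (0, \<lambda>j. if j \<le> N then 0 else g j))
     = fst (S (0, (\<lambda>_. 0)(Suc N := g (Suc N)))) + fst (S (0, \<lambda>j. if j \<le> Suc N then 0 else g j))"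
    unfolding eq using zoperator_add[OF S i1 i2] by simp
  then show ?case using Suc by (simp add: add.assoc fun_upd_def)
qed

lemma approx_via_tail:
  fixes S :: "('a::real_normed_vector, 'b::real_normed_vector) zpt \<Rightarrow> ('a, 'b) zpt"
    and G :: "'a \<Rightarrow> nat \<Rightarrow> 'a"
  assumes p: "p > 1" and S: "zcompact_op p S"
    and hA: "\<forall>j\<in>A. approximable (P0SJk S j)"
    and Gin: "\<And>x. (0::'b, G x) \<in> Zp p"
    and Gadd: "\<And>x y. G (x + y) = (\<lambda>n. G x n + G y n)"
    and Gscale: "\<And>c x. G (c *\<^sub>R x) = (\<lambda>n. c *\<^sub>R G x n)"
    and Gbd: "\<And>x. znorm p (0::'b, G x) \<le> M * norm x"
    and Gsupp: "\<And>x j. G x j \<noteq> 0 \<Longrightarrow> j \<in> A"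
  shows "approximable (\<lambda>x. fst (S (0, G x)))"
proof -
  have p0: "p > 0" using p by simp
  have Sop: "zoperator p S" using S zcompact_op_def by blast
  obtain K where K: "K \<ge> 0" "\<And>z. z \<in> Zp p \<Longrightarrow> znorm p (S z) \<le> K * znorm p z"
    using zoperator_bound[OF Sop] by blast
  define M' where "M' = max M 0"
  have M': "M' \<ge> 0" "\<And>x. znorm p (0::'b, G x) \<le> M' * norm x"
    unfolding M'_def by (auto, metis Gbd max.cobounded1 mult_right_mono norm_ge_zero order_trans)
  define T where "T = (\<lambda>x. fst (S (0::'b, G x)))"
  have bT: "bounded_linear T"
  proof (rule bounded_linear_intro)
    fix x y
    have "(0::'b, G (x + y)) = zadd (0, G x) (0, G y)" by (simp add: Gadd zadd_def)
    then show "T (x + y) = T x + T y" unfolding T_def using zoperator_add[OF Sop Gin Gin] by simp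
  next
    fix r x
    have "(0::'b, G (r *\<^sub>R x)) = zscale r (0, G x)" by (simp add: Gscale zscale_def)
    then show "T (r *\<^sub>R x) = r *\<^sub>R T x" unfolding T_def using zoperator_scale[OF Sop Gin] by simp
  next
    fix x
    have "norm (T x) \<le> znorm p (S (0, G x))"
      unfolding T_def by (rule norm_fst_le_znorm[OF zoperator_in[OF Sop Gin] p0])
    also have "\<dots> \<le> K * znorm p (0::'b, G x)" using K Gin by blast
    also have "\<dots> \<le> K * (M' * norm x)" using M' K by (simp add: mult_left_mono)
    finally show "norm (T x) \<le> norm x * (K * M')" by (simp add: algebra_simps)
  qed
  have bL: "bounded_linear (\<lambda>x. G x j)" for j
  proof (rule bounded_linear_intro)
    fix x
    have "norm (G x j) \<le> znorm p (0::'b, G x)" using norm_snd_le_znorm[OF Gin p0] by simp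
    also have "\<dots> \<le> M' * norm x" using M' by blast
    finally show "norm (G x j) \<le> norm x * M'" by (simp add: algebra_simps)
  qed (auto simp: Gadd Gscale)
  have "approximable T"
  proof (rule approximable_limit[OF bT])
    fix e :: real assume e: "e > 0"
    define eps where "eps = e / (2 * (M' + 1))"
    have eps: "eps > 0" using e M' by (simp add: eps_def)
    obtain N where N: "\<And>z. z \<in> Zp p \<Longrightarrow> fst z = 0 \<Longrightarrow> (\<forall>j\<le>N. snd z j = 0) \<Longrightarrow>
        norm (fst (S z)) \<le> eps * znorm p z"
      using tail_lemma[OF p S eps] by blast
    define F where "F = (\<lambda>j. if j \<in> A then (\<lambda>x. P0SJk S j (G x j)) else (\<lambda>x. 0::'b))"
    have aF: "approximable (\<lambda>x. \<Sum>j\<in>{1..N}. F j x)"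
      by (rule approximable_sum) (auto simp: F_def hA approximable_zero intro!: approximable_comp[OF _ bL])
    have diff: "T x - (\<Sum>j\<in>{1..N}. F j x) = fst (S (0, \<lambda>j. if j \<le> N then 0 else G x j))" for x
    proof -
      have "(\<Sum>j\<in>{1..N}. fst (S (0, (\<lambda>_. 0)(j := G x j)))) = (\<Sum>j\<in>{1..N}. F j x)"
      proof (rule sum.cong)
        fix j assume "j \<in> {1..N}"
        show "fst (S (0, (\<lambda>_. 0)(j := G x j))) = F j x"
        proof (cases "j \<in> A")
          case True then show ?thesis by (simp add: F_def P0SJk_def)
        next
          case False
          then have "G x j = 0" using Gsupp by blast
          then have "(0::'b, (\<lambda>_. 0::'a)(j := G x j)) = zzero" by (simp add: zzero_def fun_eq_iff)
          then show ?thesis using False zoperator_zero[OF Sop p0] by (simp add: F_def zzero_def)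
        qed
      qed simp
      then show ?thesis unfolding T_def using trunc_decomp[OF Sop p0 Gin[of x], where N=N] by simp
    qed
    have "onorm (\<lambda>x. T x - (\<Sum>j\<in>{1..N}. F j x)) \<le> eps * M'"
    proof (rule onorm_bound)
      show "0 \<le> eps * M'" using eps M' by simp
      fix x
      have g0: "G x 0 = 0" using Gin[of x] by (simp add: Zp_def)
      have zin: "(0::'b, \<lambda>j. if j \<le> N then 0 else G x j) \<in> Zp p"
        by (rule Zp_dom[OF Gin]) (auto simp: g0 p0)
      have "norm (T x - (\<Sum>j\<in>{1..N}. F j x)) \<le> eps * znorm p (0::'b, \<lambda>j. if j \<le> N then 0 else G x j)"
        unfolding diff using N[OF zin] by simp
      also have "\<dots> \<le> eps * znorm p (0::'b, G x)"
        using eps by (intro mult_left_mono znorm_mono[OF Gin p0]) auto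
      also have "\<dots> \<le> eps * (M' * norm x)" using eps M' by (simp add: mult_left_mono)
      finally show "norm (T x - (\<Sum>j\<in>{1..N}. F j x)) \<le> eps * M' * norm x" by (simp add: algebra_simps)
    qed
    also have "eps * M' < e"
    proof -
      have "eps * M' \<le> eps * (M' + 1)" using eps by simp
      also have "\<dots> = e / 2" using M' by (simp add: eps_def field_simps)
      finally show ?thesis using e by simp
    qed
    finally show "\<exists>G. approximable G \<and> onorm (\<lambda>x. T x - G x) < e" using aF by blast
  qed
  then show ?thesis unfolding T_def .
qed


definition gp :: "real \<Rightarrow> nat set \<Rightarrow> nat set \<Rightarrow>
   (('a::real_normed_vector, 'b::real_normed_vector) zpt \<Rightarrow> ('a, 'b) zpt) \<Rightarrow> (('a, 'b) zpt \<Rightarrow> ('a, 'b) zpt) \<Rightarrow> bool" where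
  "gp p A B U U' \<longleftrightarrow> zoperator p U \<and> zoperator p U' \<and>
     (\<forall>z\<in>Zp p. U' (U z) = z \<and> U (U' z) = z) \<and>
     (\<forall>z\<in>Zp p. fst (U z) = fst z \<and> fst (U' z) = fst z) \<and>
     (\<forall>y. U (y, \<lambda>_. 0) = (y, \<lambda>_. 0) \<and> U' (y, \<lambda>_. 0) = (y, \<lambda>_. 0)) \<and>
     (\<forall>z\<in>Zp p. fst z = 0 \<longrightarrow> (\<forall>j. snd z j \<noteq> 0 \<longrightarrow> j \<in> A) \<longrightarrow> (\<forall>j. snd (U z) j \<noteq> 0 \<longrightarrow> j \<in> B)) \<and>
     (\<forall>z\<in>Zp p. fst z = 0 \<longrightarrow> (\<forall>j. snd z j \<noteq> 0 \<longrightarrow> j \<in> B) \<longrightarrow> (\<forall>j. snd (U' z) j \<noteq> 0 \<longrightarrow> j \<in> A))"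

lemma gp_sym: "gp p A B U U' \<Longrightarrow> gp p B A U' U"
  unfolding gp_def by blast

lemma zoperator_any_in: "zoperator p U \<Longrightarrow> U z \<in> Zp p"
  by (cases "z \<in> Zp p") (auto simp: zoperator_in zoperator_out)

lemma znorm_delta:
  assumes "p > 0"
  shows "znorm p (0::'b::real_normed_vector, (\<lambda>_. 0)(k := x)) = norm (x::'a::real_normed_vector)"
proof -
  have "(\<lambda>n. norm (((\<lambda>_. 0::'a)(k := x)) n) powr p) = (\<lambda>n. if n = k then norm x powr p else 0)"
    by auto
  moreover have "(\<lambda>n. if n = k then norm x powr p else 0) sums (norm x powr p)"
    using sums_single[of k "\<lambda>_. norm x powr p"] by simp
  ultimately have "(\<Sum>n. norm (((\<lambda>_. 0::'a)(k := x)) n) powr p) = norm x powr p"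
    using sums_unique by fastforce
  then show ?thesis unfolding znorm_def using assms by (simp add: powr_powr)
qed

lemma conj_in_IA:
  fixes S :: "('a::real_normed_vector, 'b::real_normed_vector) zpt \<Rightarrow> ('a, 'b) zpt"
  assumes p: "p > 1" and g: "gp p A B U U'" and S: "S \<in> IA p A" and B0: "0 \<notin> B"
  shows "(\<lambda>z. U (S (U' z))) \<in> IA p B"
proof -
  have p0: "p > 0" using p by simp
  have U: "zoperator p U" and U': "zoperator p U'" using g gp_def by blast+
  have Sc: "zcompact_op p S" using S IA_def by blast
  have Sop: "zoperator p S" using Sc zcompact_op_def by blast
  obtain KU where KU: "KU \<ge> 0" "\<And>z. z \<in> Zp p \<Longrightarrow> znorm p (U z) \<le> KU * znorm p z"
    using zoperator_bound[OF U] by blast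
  obtain KS where KS: "KS \<ge> 0" "\<And>z. z \<in> Zp p \<Longrightarrow> znorm p (S z) \<le> KS * znorm p z"
    using zoperator_bound[OF Sop] by blast
  obtain K0 where K0: "K0 \<ge> 0" "\<And>z. z \<in> Zp p \<Longrightarrow> znorm p (U' z) \<le> K0 * znorm p z"
    using zoperator_bound[OF U'] by blast
  define K' where "K' = max K0 1"
  have K': "K' \<ge> 1" "\<And>z. z \<in> Zp p \<Longrightarrow> znorm p (U' z) \<le> K' * znorm p z"
    unfolding K'_def
  proof -
    show "max K0 1 \<ge> 1" by simp
    fix z :: "('a,'b) zpt" assume z: "z \<in> Zp p"
    have "znorm p (U' z) \<le> K0 * znorm p z" using K0(2)[OF z] .
    also have "\<dots> \<le> max K0 1 * znorm p z" by (intro mult_right_mono) (auto simp: znorm_nonneg)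
    finally show "znorm p (U' z) \<le> max K0 1 * znorm p z" .
  qed
  have U'in: "U' z \<in> Zp p" for z using zoperator_any_in[OF U'] .
  have SU'in: "S (U' z) \<in> Zp p" for z using zoperator_in[OF Sop U'in] .
  define \<Phi> where "\<Phi> = (\<lambda>z. U (S (U' z)))"
  have op: "zoperator p \<Phi>"
    unfolding zoperator_def
  proof (intro conjI ballI allI impI)
    fix z :: "('a,'b) zpt"
    show "\<Phi> z \<in> Zp p" unfolding \<Phi>_def using zoperator_any_in[OF U] .
  next
    fix z :: "('a,'b) zpt" assume "z \<notin> Zp p"
    then show "\<Phi> z = zzero" unfolding \<Phi>_def
      by (simp add: zoperator_out[OF U'] zoperator_zero[OF Sop p0] zoperator_zero[OF U p0])
  next
    fix z w :: "('a,'b) zpt" assume "z \<in> Zp p" "w \<in> Zp p"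
    then show "\<Phi> (zadd z w) = zadd (\<Phi> z) (\<Phi> w)" unfolding \<Phi>_def
      by (simp add: zoperator_add[OF U'] zoperator_add[OF Sop U'in U'in] zoperator_add[OF U SU'in SU'in])
  next
    fix c and z :: "('a,'b) zpt" assume "z \<in> Zp p"
    then show "\<Phi> (zscale c z) = zscale c (\<Phi> z)" unfolding \<Phi>_def
      by (simp add: zoperator_scale[OF U'] zoperator_scale[OF Sop U'in] zoperator_scale[OF U SU'in])
  next
    show "\<exists>K. \<forall>z\<in>Zp p. znorm p (\<Phi> z) \<le> K * znorm p z"
    proof (intro exI ballI)
      fix z :: "('a,'b) zpt" assume z: "z \<in> Zp p"
      have "znorm p (\<Phi> z) \<le> KU * znorm p (S (U' z))" unfolding \<Phi>_def using KU SU'in by blast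
      also have "\<dots> \<le> KU * (KS * znorm p (U' z))" using KU KS U'in by (simp add: mult_left_mono)
      also have "\<dots> \<le> KU * (KS * (K' * znorm p z))" using KU KS K' z by (simp add: mult_left_mono)
      finally show "znorm p (\<Phi> z) \<le> (KU * KS * K') * znorm p z" by (simp add: algebra_simps)
    qed
  qed
  have comp: "zcompact_op p \<Phi>"
    unfolding zcompact_op_def
  proof (intro conjI op allI impI)
    fix x :: "nat \<Rightarrow> ('a,'b) zpt"
    assume x: "\<forall>n. x n \<in> Zp p \<and> znorm p (x n) \<le> 1"
    define v where "v = (\<lambda>n. zscale (1/K') (U' (x n)))"
    have v: "\<forall>n. v n \<in> Zp p \<and> znorm p (v n) \<le> 1"
    proof
      fix n
      have "znorm p (v n) = (1/K') * znorm p (U' (x n))"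
        unfolding v_def using znorm_zscale[OF U'in p0] K' by simp
      also have "\<dots> \<le> (1/K') * (K' * znorm p (x n))"
        using K' x by (intro mult_left_mono) auto
      also have "\<dots> \<le> 1" using K' x by simp
      finally show "v n \<in> Zp p \<and> znorm p (v n) \<le> 1" unfolding v_def using Zp_zscale[OF U'in p0] by simp
    qed
    then obtain r w where rw: "strict_mono r" "w \<in> Zp p" "(\<lambda>n. znorm p (zsub (S (v (r n))) w)) \<longlonglongrightarrow> 0"
      using Sc unfolding zcompact_op_def by blast
    have U'x: "U' (x n) = zscale K' (v n)" for n
      unfolding v_def using K' by (simp add: zscale_def)
    have eq: "zsub (\<Phi> (x (r n))) (U (zscale K' w)) = U (zscale K' (zsub (S (v (r n))) w))" for n
    proof -
      have vin: "v (r n) \<in> Zp p" using v by blast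
      have Svin: "S (v (r n)) \<in> Zp p" using zoperator_in[OF Sop vin] .
      have "\<Phi> (x (r n)) = U (zscale K' (S (v (r n))))"
        unfolding \<Phi>_def U'x zoperator_scale[OF Sop vin] ..
      then show ?thesis
        using zoperator_sub[OF U Zp_zscale[OF Svin p0] Zp_zscale[OF rw(2) p0] p0]
        by (simp add: zscale_zsub)
    qed
    have bnd: "znorm p (zsub (\<Phi> (x (r n))) (U (zscale K' w))) \<le> (KU * K') * znorm p (zsub (S (v (r n))) w)" for n
    proof -
      have vin: "v (r n) \<in> Zp p" using v by blast
      have din: "zsub (S (v (r n))) w \<in> Zp p" using Zp_zsub[OF zoperator_in[OF Sop vin] rw(2) p0] .
      have "znorm p (zsub (\<Phi> (x (r n))) (U (zscale K' w))) \<le> KU * znorm p (zscale K' (zsub (S (v (r n))) w))"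
        unfolding eq using KU(2)[OF Zp_zscale[OF din p0]] .
      also have "\<dots> = KU * (K' * znorm p (zsub (S (v (r n))) w))"
        using znorm_zscale[OF din p0] K' by simp
      finally show ?thesis by (simp add: algebra_simps)
    qed
    have "(\<lambda>n. znorm p (zsub (\<Phi> (x (r n))) (U (zscale K' w)))) \<longlonglongrightarrow> 0"
    proof (rule tendsto_sandwich[where f="\<lambda>_. 0" and h="\<lambda>n. (KU * K') * znorm p (zsub (S (v (r n))) w)"])
      show "\<forall>\<^sub>F n in sequentially. 0 \<le> znorm p (zsub (\<Phi> (x (r n))) (U (zscale K' w)))"
        by (simp add: znorm_nonneg)
      show "\<forall>\<^sub>F n in sequentially. znorm p (zsub (\<Phi> (x (r n))) (U (zscale K' w))) \<le> (KU * K') * znorm p (zsub (S (v (r n))) w)"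
        using bnd by simp
      show "(\<lambda>n. (KU * K') * znorm p (zsub (S (v (r n))) w)) \<longlonglongrightarrow> 0"
        using tendsto_mult_right_zero[OF rw(3)] by simp
    qed simp
    moreover have "U (zscale K' w) \<in> Zp p" using zoperator_any_in[OF U] .
    ultimately show "\<exists>r w. strict_mono r \<and> w \<in> Zp p \<and> (\<lambda>n. znorm p (zsub (\<Phi> (x (r n))) w)) \<longlonglongrightarrow> 0"
      using rw(1) by blast
  qed
  have fstU: "\<And>z. z \<in> Zp p \<Longrightarrow> fst (U z) = fst z" using g unfolding gp_def by (elim conjE) blast
  have fstU': "\<And>z. z \<in> Zp p \<Longrightarrow> fst (U' z) = fst z" using g unfolding gp_def by (elim conjE) blast
  have U'0: "\<And>y. U' (y, \<lambda>_. 0) = (y, \<lambda>_. 0)" using g unfolding gp_def by (elim conjE) blast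
  have suppU': "\<And>z. z \<in> Zp p \<Longrightarrow> fst z = 0 \<Longrightarrow> (\<forall>j. snd z j \<noteq> 0 \<longrightarrow> j \<in> B) \<Longrightarrow> snd (U' z) j \<noteq> 0 \<Longrightarrow> j \<in> A"
    for j using g unfolding gp_def by (elim conjE) blast
  have a0: "approximable (P0SJ0 \<Phi>)"
  proof -
    have "P0SJ0 \<Phi> y = P0SJ0 S y" for y
    proof -
      have "P0SJ0 \<Phi> y = fst (U (S (U' (y, \<lambda>_. 0))))" unfolding P0SJ0_def \<Phi>_def by simp
      also have "\<dots> = fst (S (U' (y, \<lambda>_. 0)))" by (rule fstU[OF SU'in])
      also have "\<dots> = P0SJ0 S y" unfolding P0SJ0_def by (simp only: U'0)
      finally show ?thesis .
    qed
    then have "P0SJ0 \<Phi> = P0SJ0 S" by blast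
    then show ?thesis using S IA_def by auto
  qed
  have ak: "approximable (P0SJk \<Phi> k)" if k: "k \<in> B" for k
  proof -
    have k0: "k \<noteq> 0" using k B0 by (metis)
    have din: "(0::'b, (\<lambda>_. 0::'a)(k := x)) \<in> Zp p" for x
    proof -
      have e: "(\<lambda>n. norm (((\<lambda>_. 0::'a)(k := x)) n) powr p) = (\<lambda>n. if n = k then norm x powr p else 0)"
        by auto
      have "summable (\<lambda>n. if n = k then norm x powr p else 0)"
        using sums_single[of k "\<lambda>_. norm x powr p"] sums_summable by fastforce
      then have "summable (\<lambda>n. norm (((\<lambda>_. 0::'a)(k := x)) n) powr p)" by (simp only: e)
      then show ?thesis using k0 by (simp add: Zp_def)
    qed
    define G where "G = (\<lambda>x. snd (U' (0::'b, (\<lambda>_. 0::'a)(k := x))))"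
    have U'd: "U' (0::'b, (\<lambda>_. 0::'a)(k := x)) = (0, G x)" for x
      using fstU'[OF din[of x]] unfolding G_def by (metis prod.collapse fst_conv)
    have Gin: "(0::'b, G x) \<in> Zp p" for x using U'in[of "(0, (\<lambda>_. 0)(k := x))"] U'd by simp
    have Gadd: "G (x + y) = (\<lambda>n. G x n + G y n)" for x y
    proof -
      have "(0::'b, (\<lambda>_. 0::'a)(k := x + y)) = zadd (0, (\<lambda>_. 0)(k := x)) (0, (\<lambda>_. 0)(k := y))"
        by (simp add: zadd_def fun_eq_iff)
      then show ?thesis unfolding G_def using zoperator_add[OF U' din din] by simp
    qed
    have Gscale: "G (c *\<^sub>R x) = (\<lambda>n. c *\<^sub>R G x n)" for c x
    proof -
      have "(0::'b, (\<lambda>_. 0::'a)(k := c *\<^sub>R x)) = zscale c (0, (\<lambda>_. 0)(k := x))"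
        by (simp add: zscale_def fun_eq_iff)
      then show ?thesis unfolding G_def using zoperator_scale[OF U' din] by simp
    qed
    have Gbd: "znorm p (0::'b, G x) \<le> K' * norm x" for x
    proof -
      have "znorm p (0::'b, G x) = znorm p (U' (0::'b, (\<lambda>_. 0::'a)(k := x)))" by (simp add: U'd)
      also have "\<dots> \<le> K' * znorm p (0::'b, (\<lambda>_. 0::'a)(k := x))" using K'(2)[OF din[of x]] .
      also have "\<dots> = K' * norm x" by (subst znorm_delta[OF p0]) (rule refl)
      finally show ?thesis .
    qed
    have Gsupp: "G x j \<noteq> 0 \<Longrightarrow> j \<in> A" for x j
    proof -
      assume "G x j \<noteq> 0"
      then have "snd (U' (0::'b, (\<lambda>_. 0::'a)(k := x))) j \<noteq> 0" by (simp add: G_def)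
      moreover have "\<forall>i. snd (0::'b, (\<lambda>_. 0::'a)(k := x)) i \<noteq> 0 \<longrightarrow> i \<in> B"
        using k by simp
      ultimately show "j \<in> A" using suppU'[OF din[of x]] by simp
    qed
    have "approximable (\<lambda>x. fst (S (0, G x)))"
    proof -
      have hA: "\<forall>j\<in>A. approximable (P0SJk S j)" using S by (simp add: IA_def)
      show ?thesis by (rule approx_via_tail[OF p Sc hA Gin Gadd Gscale Gbd Gsupp])
    qed
    moreover have "P0SJk \<Phi> k x = fst (S (0, G x))" for x
    proof -
      have "P0SJk \<Phi> k x = fst (U (S (U' (0, (\<lambda>_. 0)(k := x)))))" unfolding P0SJk_def \<Phi>_def by simp
      also have "\<dots> = fst (S (U' (0, (\<lambda>_. 0)(k := x))))" by (rule fstU[OF SU'in])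
      also have "\<dots> = fst (S (0, G x))" by (simp only: U'd)
      finally show ?thesis .
    qed
    then have "P0SJk \<Phi> k = (\<lambda>x. fst (S (0, G x)))" by blast
    ultimately show ?thesis by simp
  qed
  have "\<Phi> \<in> IA p B" unfolding IA_def using comp a0 ak by blast
  then show ?thesis by (simp add: \<Phi>_def)
qed


lemma nn_conv:
  fixes g :: "nat \<Rightarrow> real"
  assumes "\<And>n. g n \<ge> 0" "summable g"
  shows "infsum g UNIV = suminf g"
  using sums_nonneg_imp_has_sum[OF summable_sums[OF assms(2)] assms(1)] by (rule infsumI)

locale lpiso =
  fixes p :: real and T :: "(nat \<Rightarrow> 'a::real_normed_vector) \<Rightarrow> 'a" and c C :: real
  assumes p1: "p > 1"
    and Tbij: "bij_betw T (lp_seq p) UNIV"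
    and Tadd: "\<And>f g. f \<in> lp_seq p \<Longrightarrow> g \<in> lp_seq p \<Longrightarrow> T (\<lambda>n. f n + g n) = T f + T g"
    and Tscale: "\<And>a f. f \<in> lp_seq p \<Longrightarrow> T (\<lambda>n. a *\<^sub>R f n) = a *\<^sub>R T f"
    and c: "c > 0" and C: "C > 0"
    and Tlow: "\<And>f. f \<in> lp_seq p \<Longrightarrow> c * lp_norm p f \<le> norm (T f)"
    and Tup: "\<And>f. f \<in> lp_seq p \<Longrightarrow> norm (T f) \<le> C * lp_norm p f"
begin

lemma p0: "p > 0" using p1 by simp

definition Ti :: "'a \<Rightarrow> nat \<Rightarrow> 'a" where "Ti = inv_into (lp_seq p) T"

lemma L_iff: "f \<in> lp_seq p \<longleftrightarrow> summable (\<lambda>n. norm (f n) powr p)"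
  by (simp add: lp_seq_def)

lemma Ti_in: "Ti x \<in> lp_seq p"
  unfolding Ti_def using Tbij by (metis UNIV_I bij_betw_def inv_into_into)

lemma T_Ti: "T (Ti x) = x"
  unfolding Ti_def using Tbij by (metis UNIV_I bij_betw_inv_into_right)

lemma Ti_T: "f \<in> lp_seq p \<Longrightarrow> Ti (T f) = f"
  unfolding Ti_def using Tbij by (metis bij_betw_inv_into_left)

lemma zero_L: "(\<lambda>_. 0) \<in> lp_seq p"
  by (simp add: L_iff)

lemma T_zero: "T (\<lambda>_. 0) = 0"
  using Tscale[OF zero_L, of 0] by simp

lemma Ti_zero: "Ti 0 = (\<lambda>_. 0)"
  using Ti_T[OF zero_L] T_zero by simp

lemma Ti_add: "Ti (x + y) = (\<lambda>n. Ti x n + Ti y n)"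
proof -
  have i: "(\<lambda>n. Ti x n + Ti y n) \<in> lp_seq p"
    using Ti_in[of x] Ti_in[of y] p0 by (simp add: L_iff summable_powr_add)
  have "T (\<lambda>n. Ti x n + Ti y n) = x + y" using Tadd[OF Ti_in Ti_in] T_Ti by simp
  then show ?thesis using Ti_T[OF i] by simp
qed

lemma Ti_scale: "Ti (a *\<^sub>R x) = (\<lambda>n. a *\<^sub>R Ti x n)"
proof -
  have i: "(\<lambda>n. a *\<^sub>R Ti x n) \<in> lp_seq p"
    using Ti_in[of x] p0 summable_powr_scale[of "Ti x" p a] by (simp add: L_iff del: norm_scaleR)
  have "T (\<lambda>n. a *\<^sub>R Ti x n) = a *\<^sub>R x" using Tscale[OF Ti_in] T_Ti by simp
  then show ?thesis using Ti_T[OF i] by simp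
qed

lemma Ti_bound: "(\<Sum>n. norm (Ti x n) powr p) \<le> (1/c) powr p * norm x powr p"
proof -
  define s where "s = (\<Sum>n. norm (Ti x n) powr p)"
  have s0: "s \<ge> 0" unfolding s_def using Ti_in[of x] by (intro suminf_nonneg) (auto simp: L_iff)
  have "c * s powr (1/p) \<le> norm x" using Tlow[OF Ti_in[of x]] T_Ti unfolding lp_norm_def s_def by simp
  then have le: "s powr (1/p) \<le> norm x / c" using c by (simp add: field_simps)
  have "s = (s powr (1/p)) powr p" using s0 p0 by (simp add: powr_powr)
  also have "\<dots> \<le> (norm x / c) powr p" using le p0 by (intro powr_mono2) auto
  also have "\<dots> = (1/c) powr p * norm x powr p" using c by (simp add: powr_mult[symmetric] divide_inverse mult.commute powr_divide)
  finally show ?thesis unfolding s_def .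
qed

lemma T_bound:
  assumes "f \<in> lp_seq p"
  shows "norm (T f) powr p \<le> C powr p * (\<Sum>n. norm (f n) powr p)"
proof -
  define s where "s = (\<Sum>n. norm (f n) powr p)"
  have s0: "s \<ge> 0" unfolding s_def using assms by (intro suminf_nonneg) (auto simp: L_iff)
  have "norm (T f) \<le> C * s powr (1/p)" using Tup[OF assms] unfolding lp_norm_def s_def by simp
  then have "norm (T f) powr p \<le> (C * s powr (1/p)) powr p" using p0 by (intro powr_mono2) auto
  also have "\<dots> = C powr p * s" using C s0 p0 by (simp add: powr_mult powr_powr)
  finally show ?thesis unfolding s_def .
qed

definition adm :: "(nat \<times> nat \<Rightarrow> nat \<times> nat) \<Rightarrow> bool" where
  "adm \<sigma> \<longleftrightarrow> bij \<sigma> \<and> (\<forall>n. \<sigma> (0, n) = (0, n))"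

lemma adm_inv: "adm \<sigma> \<Longrightarrow> adm (inv \<sigma>)"
  unfolding adm_def by (metis bij_imp_bij_inv bij_inv_eq_iff)

lemma adm_fst: "adm \<sigma> \<Longrightarrow> fst q \<noteq> 0 \<Longrightarrow> fst (\<sigma> q) \<noteq> 0"
  unfolding adm_def by (metis bij_pointE prod.collapse)

definition V :: "(nat \<times> nat \<Rightarrow> nat \<times> nat) \<Rightarrow> (nat \<Rightarrow> 'a) \<Rightarrow> nat \<Rightarrow> 'a" where
  "V \<sigma> f = (\<lambda>j. if j = 0 then 0 else T (\<lambda>n. Ti (f (fst (\<sigma> (j, n)))) (snd (\<sigma> (j, n)))))"

lemma V_props:
  assumes adm: "adm \<sigma>" and sf: "summable (\<lambda>j. norm (f j) powr p)"
  shows "(\<forall>j. (\<lambda>n. Ti (f (fst (\<sigma> (j, n)))) (snd (\<sigma> (j, n)))) \<in> lp_seq p)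
     \<and> summable (\<lambda>j. norm (V \<sigma> f j) powr p)
     \<and> (\<Sum>j. norm (V \<sigma> f j) powr p) \<le> (C / c) powr p * (\<Sum>j. norm (f j) powr p)"
proof -
  have bij: "bij \<sigma>" using adm adm_def by blast
  define a where "a = (\<lambda>q. norm (Ti (f (fst q)) (snd q)) powr p)"
  have a0: "a q \<ge> 0" for q by (simp add: a_def)
  have rowA: "summable (\<lambda>n. a (j, n))" for j using Ti_in[of "f j"] by (simp add: a_def L_iff)
  define ga where "ga = (\<lambda>j. \<Sum>n. a (j, n))"
  have ga_le: "ga j \<le> (1/c) powr p * norm (f j) powr p" for j
    unfolding ga_def a_def using Ti_bound by simp
  have ga0: "ga j \<ge> 0" for j unfolding ga_def using rowA a0 by (intro suminf_nonneg) auto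
  have sga: "summable ga"
    by (rule summable_comparison_test'[where g="\<lambda>j. (1/c) powr p * norm (f j) powr p"])
       (use sf ga_le ga0 in \<open>auto intro: summable_mult\<close>)
  have hasA: "((\<lambda>n. a (j, n)) has_sum ga j) UNIV" for j
    unfolding ga_def by (rule sums_nonneg_imp_has_sum[OF summable_sums[OF rowA] a0])
  have aS: "a summable_on UNIV"
    using summable_on_SigmaI[where f=a and A=UNIV and B="\<lambda>_. UNIV", OF hasA] sga ga0 a0
      summable_on_UNIV_nonneg_real_iff[of ga] by simp
  define b where "b = (\<lambda>q. a (\<sigma> q))"
  have bS: "b summable_on UNIV"
    unfolding b_def using summable_on_reindex_bij_betw[of \<sigma> UNIV UNIV a] bij aS by (simp add: bij_def)
  have ib: "infsum b UNIV = infsum a UNIV"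
    unfolding b_def using infsum_reindex_bij_betw[of \<sigma> UNIV UNIV a] bij by (simp add: bij_def)
  have b0: "b q \<ge> 0" for q by (simp add: b_def a0)
  have rowBon: "(\<lambda>n. b (j, n)) summable_on UNIV" for j
    using summable_on_SigmaD1[of "\<lambda>x y. b (x, y)" UNIV "\<lambda>_. UNIV" j] bS by simp
  have rowB: "summable (\<lambda>n. b (j, n))" for j using summable_on_imp_summable[OF rowBon] .
  have rowL: "(\<lambda>n. Ti (f (fst (\<sigma> (j, n)))) (snd (\<sigma> (j, n)))) \<in> lp_seq p" for j
    using rowB[of j] by (simp add: L_iff b_def a_def)
  define gb where "gb = (\<lambda>j. infsum (\<lambda>n. b (j, n)) UNIV)"
  have gb_eq: "gb j = (\<Sum>n. b (j, n))" for j unfolding gb_def by (rule nn_conv[OF b0 rowB])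
  have gb0: "gb j \<ge> 0" for j unfolding gb_eq using rowB b0 by (intro suminf_nonneg) auto
  have gbS: "gb summable_on UNIV"
    unfolding gb_def using summable_on_SigmaD[of b UNIV "\<lambda>_. UNIV"] bS rowBon by simp
  have sgb: "summable gb" using summable_on_imp_summable[OF gbS] .
  have Vle: "norm (V \<sigma> f j) powr p \<le> C powr p * gb j" for j
  proof (cases "j = 0")
    case True then show ?thesis using gb0 by (simp add: V_def)
  next
    case False
    have "norm (V \<sigma> f j) powr p \<le> C powr p * (\<Sum>n. norm (Ti (f (fst (\<sigma> (j, n)))) (snd (\<sigma> (j, n)))) powr p)"
      using T_bound[OF rowL[of j]] False by (simp add: V_def)
    also have "(\<Sum>n. norm (Ti (f (fst (\<sigma> (j, n)))) (snd (\<sigma> (j, n)))) powr p) = gb j"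
      unfolding gb_eq by (simp add: b_def a_def)
    finally show ?thesis .
  qed
  have sV: "summable (\<lambda>j. norm (V \<sigma> f j) powr p)"
    by (rule summable_comparison_test'[where g="\<lambda>j. C powr p * gb j"]) (use Vle sgb in \<open>auto intro: summable_mult\<close>)
  have "(\<Sum>j. norm (V \<sigma> f j) powr p) \<le> (\<Sum>j. C powr p * gb j)"
    using sV sgb Vle by (intro suminf_le) (auto intro: summable_mult)
  also have "\<dots> = C powr p * (\<Sum>j. gb j)" using sgb by (rule suminf_mult)
  also have "(\<Sum>j. gb j) = infsum gb UNIV" using nn_conv[OF gb0 sgb] by simp
  also have "infsum gb UNIV = infsum b UNIV"
    unfolding gb_def using infsum_Sigma_banach[of b UNIV "\<lambda>_. UNIV"] bS by simp
  also have "\<dots> = infsum a UNIV" by (rule ib)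
  also have "infsum a UNIV = infsum ga UNIV"
  proof -
    have "infsum a UNIV = infsum (\<lambda>j. infsum (\<lambda>n. a (j, n)) UNIV) UNIV"
      using infsum_Sigma_banach[of a UNIV "\<lambda>_. UNIV"] aS by simp
    also have "\<dots> = infsum ga UNIV" by (rule infsum_cong) (metis hasA infsumI)
    finally show ?thesis .
  qed
  also have "infsum ga UNIV = (\<Sum>j. ga j)" using nn_conv[OF ga0 sga] .
  also have "(\<Sum>j. ga j) \<le> (\<Sum>j. (1/c) powr p * norm (f j) powr p)"
    using sga sf ga_le by (intro suminf_le) (auto intro: summable_mult)
  also have "\<dots> = (1/c) powr p * (\<Sum>j. norm (f j) powr p)" using sf by (rule suminf_mult)
  finally have "(\<Sum>j. norm (V \<sigma> f j) powr p) \<le> C powr p * ((1/c) powr p * (\<Sum>j. norm (f j) powr p))"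
    using C by (simp add: mult_left_mono)
  also have "\<dots> = (C / c) powr p * (\<Sum>j. norm (f j) powr p)"
    using C c by (simp add: powr_mult[symmetric] divide_inverse)
  finally show ?thesis using rowL sV by blast
qed

end


context lpiso begin

lemma V_inv:
  assumes adm: "adm \<sigma>" and f0: "f 0 = 0" and sf: "summable (\<lambda>j. norm (f j) powr p)"
  shows "V (inv \<sigma>) (V \<sigma> f) = f"
proof
  fix j
  have bij: "bij \<sigma>" using adm adm_def by blast
  have rows: "\<And>i. (\<lambda>n. Ti (f (fst (\<sigma> (i, n)))) (snd (\<sigma> (i, n)))) \<in> lp_seq p"
    using V_props[OF adm sf] by blast
  show "V (inv \<sigma>) (V \<sigma> f) j = f j"
  proof (cases "j = 0")
    case True then show ?thesis using f0 by (simp add: V_def)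
  next
    case False
    have row: "Ti (V \<sigma> f (fst (inv \<sigma> (j, n)))) (snd (inv \<sigma> (j, n))) = Ti (f j) n" for n
    proof -
      define q where "q = inv \<sigma> (j, n)"
      have q0: "fst q \<noteq> 0" unfolding q_def using adm_fst[OF adm_inv[OF adm], of "(j, n)"] False by simp
      have sq: "\<sigma> q = (j, n)" unfolding q_def using surj_f_inv_f[OF bij_is_surj[OF bij]] by simp
      have "Ti (V \<sigma> f (fst q)) = (\<lambda>m. Ti (f (fst (\<sigma> (fst q, m)))) (snd (\<sigma> (fst q, m))))"
        using q0 Ti_T[OF rows[of "fst q"]] by (simp add: V_def)
      then have "Ti (V \<sigma> f (fst q)) (snd q) = Ti (f (fst (\<sigma> q))) (snd (\<sigma> q))" by simp
      then show ?thesis using sq q_def by simp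
    qed
    have "V (inv \<sigma>) (V \<sigma> f) j = T (\<lambda>n. Ti (f j) n)" using False row by (simp add: V_def)
    also have "\<dots> = f j" using T_Ti by (simp add: eta_contract_eq)
    finally show ?thesis .
  qed
qed

lemma V_add:
  assumes adm: "adm \<sigma>" and sf: "summable (\<lambda>j. norm (f j) powr p)" and sg: "summable (\<lambda>j. norm (g j) powr p)"
  shows "V \<sigma> (\<lambda>j. f j + g j) = (\<lambda>j. V \<sigma> f j + V \<sigma> g j)"
proof
  fix j
  have rf: "(\<lambda>n. Ti (f (fst (\<sigma> (j, n)))) (snd (\<sigma> (j, n)))) \<in> lp_seq p" using V_props[OF adm sf] by blast
  have rg: "(\<lambda>n. Ti (g (fst (\<sigma> (j, n)))) (snd (\<sigma> (j, n)))) \<in> lp_seq p" using V_props[OF adm sg] by blast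
  show "V \<sigma> (\<lambda>j. f j + g j) j = V \<sigma> f j + V \<sigma> g j"
    by (cases "j = 0") (simp_all add: V_def Ti_add Tadd[OF rf rg])
qed

lemma V_scale:
  assumes adm: "adm \<sigma>" and sf: "summable (\<lambda>j. norm (f j) powr p)"
  shows "V \<sigma> (\<lambda>j. a *\<^sub>R f j) = (\<lambda>j. a *\<^sub>R V \<sigma> f j)"
proof
  fix j
  have rf: "(\<lambda>n. Ti (f (fst (\<sigma> (j, n)))) (snd (\<sigma> (j, n)))) \<in> lp_seq p" using V_props[OF adm sf] by blast
  show "V \<sigma> (\<lambda>j. a *\<^sub>R f j) j = a *\<^sub>R V \<sigma> f j"
    by (cases "j = 0") (simp_all add: V_def Ti_scale Tscale[OF rf])
qed

lemma V_zero: "V \<sigma> (\<lambda>_. 0) = (\<lambda>_. 0)"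
  by (simp add: V_def Ti_zero T_zero fun_eq_iff)

lemma V_supp:
  assumes AB: "\<And>q. fst (\<sigma> q) \<in> A \<longleftrightarrow> fst q \<in> B" and fA: "\<And>j. f j \<noteq> 0 \<Longrightarrow> j \<in> A"
    and nz: "V \<sigma> f j \<noteq> 0"
  shows "j \<in> B"
proof (rule ccontr)
  assume jB: "j \<notin> B"
  have "f (fst (\<sigma> (j, n))) = 0" for n using AB[of "(j, n)"] jB fA by auto
  then have "V \<sigma> f j = 0" by (simp add: V_def Ti_zero T_zero)
  then show False using nz by simp
qed

definition Uop :: "(nat \<times> nat \<Rightarrow> nat \<times> nat) \<Rightarrow> ('a, 'b::real_normed_vector) zpt \<Rightarrow> ('a, 'b) zpt" where
  "Uop \<sigma> z = (if z \<in> Zp p then (fst z, V \<sigma> (snd z)) else zzero)"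

lemma Uop_in:
  assumes adm: "adm \<sigma>" and z: "z \<in> Zp p"
  shows "Uop \<sigma> z \<in> Zp p"
  using V_props[OF adm, of "snd z"] z by (simp add: Uop_def Zp_iff V_def)

lemma Uop_zoperator:
  assumes adm: "adm \<sigma>"
  shows "zoperator p (Uop \<sigma> :: ('a, 'b::real_normed_vector) zpt \<Rightarrow> ('a, 'b) zpt)"
  unfolding zoperator_def
proof (intro conjI ballI allI impI)
  fix z :: "('a,'b) zpt" assume "z \<in> Zp p" then show "Uop \<sigma> z \<in> Zp p" using Uop_in[OF adm] by blast
next
  fix z :: "('a,'b) zpt" assume "z \<notin> Zp p" then show "Uop \<sigma> z = zzero" by (simp add: Uop_def)
next
  fix z w :: "('a,'b) zpt" assume z: "z \<in> Zp p" and w: "w \<in> Zp p"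
  have sz: "summable (\<lambda>j. norm (snd z j) powr p)" and sw: "summable (\<lambda>j. norm (snd w j) powr p)"
    using z w Zp_iff by blast+
  show "Uop \<sigma> (zadd z w) = zadd (Uop \<sigma> z) (Uop \<sigma> w)"
    using z w Zp_zadd[OF z w p0] V_add[OF adm sz sw] by (simp add: Uop_def zadd_def)
next
  fix a and z :: "('a,'b) zpt" assume z: "z \<in> Zp p"
  have sz: "summable (\<lambda>j. norm (snd z j) powr p)" using z Zp_iff by blast
  show "Uop \<sigma> (zscale a z) = zscale a (Uop \<sigma> z)"
    using z Zp_zscale[OF z p0] V_scale[OF adm sz] by (simp add: Uop_def zscale_def)
next
  define Mx where "Mx = max 1 ((C / c) powr p)"
  show "\<exists>K. \<forall>z\<in>Zp p. znorm p (Uop \<sigma> (z::('a,'b) zpt)) \<le> K * znorm p z"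
  proof (rule exI[of _ "Mx powr (1/p)"], intro ballI)
    fix z :: "('a,'b) zpt" assume z: "z \<in> Zp p"
    have sz: "summable (\<lambda>j. norm (snd z j) powr p)" using z Zp_iff by blast
    have Vb: "(\<Sum>j. norm (V \<sigma> (snd z) j) powr p) \<le> (C / c) powr p * (\<Sum>j. norm (snd z j) powr p)"
      using V_props[OF adm sz] by blast
    have sV: "summable (\<lambda>j. norm (V \<sigma> (snd z) j) powr p)" using V_props[OF adm sz] by blast
    have s0: "(\<Sum>j. norm (snd z j) powr p) \<ge> 0" using sz by (intro suminf_nonneg) auto
    have sV0: "(\<Sum>j. norm (V \<sigma> (snd z) j) powr p) \<ge> 0" using sV by (intro suminf_nonneg) auto
    have "norm (fst z) powr p + (\<Sum>j. norm (V \<sigma> (snd z) j) powr p)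
        \<le> Mx * (norm (fst z) powr p + (\<Sum>j. norm (snd z j) powr p))"
    proof -
      have "norm (fst z) powr p \<le> Mx * norm (fst z) powr p" by (simp add: Mx_def mult_le_cancel_right1)
      moreover have "(C / c) powr p * (\<Sum>j. norm (snd z j) powr p) \<le> Mx * (\<Sum>j. norm (snd z j) powr p)"
        using s0 by (intro mult_right_mono) (auto simp: Mx_def)
      ultimately show ?thesis using Vb by (simp add: distrib_left)
    qed
    then have "znorm p (Uop \<sigma> z) \<le> (Mx * (norm (fst z) powr p + (\<Sum>j. norm (snd z j) powr p))) powr (1/p)"
      unfolding znorm_def using z sV0 p0 by (simp add: Uop_def) (intro powr_mono2, auto)
    also have "\<dots> = Mx powr (1/p) * znorm p z"
      unfolding znorm_def using s0 by (subst powr_mult) (auto simp: Mx_def)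
    finally show "znorm p (Uop \<sigma> z) \<le> Mx powr (1/p) * znorm p z" by simp
  qed
qed

end


lemma bij_inf:
  fixes X Y :: "nat set"
  assumes "X \<noteq> {}" "Y \<noteq> {}"
  shows "\<exists>g. bij_betw g (X \<times> (UNIV::nat set)) (Y \<times> (UNIV::nat set))"
proof -
  have inf: "infinite (Z \<times> (UNIV::nat set))" if "Z \<noteq> {}" for Z :: "nat set"
    using finite_cartesian_productD2 that by blast
  have cnt: "countable (Z \<times> (UNIV::nat set))" for Z :: "nat set" by simp
  have "bij_betw (to_nat_on (X \<times> (UNIV::nat set))) (X \<times> UNIV) UNIV"
    using to_nat_on_infinite[OF cnt inf[OF assms(1)]] .
  moreover have "bij_betw (from_nat_into (Y \<times> (UNIV::nat set))) UNIV (Y \<times> UNIV)"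
    using bij_betw_from_nat_into[OF cnt inf[OF assms(2)]] .
  ultimately show ?thesis using bij_betw_trans by blast
qed

lemma sigma_exists:
  fixes A B :: "nat set"
  assumes A: "A \<noteq> {}" "A \<subset> {1..}" and B: "B \<noteq> {}" "B \<subset> {1..}"
  shows "\<exists>\<sigma>::nat \<times> nat \<Rightarrow> nat \<times> nat. bij \<sigma> \<and> (\<forall>n. \<sigma> (0, n) = (0, n)) \<and> (\<forall>q. fst (\<sigma> q) \<in> A \<longleftrightarrow> fst q \<in> B)"
proof -
  define CA where "CA = {1..} - A"
  define CB where "CB = {1..} - B"
  have CA: "CA \<noteq> {}" using A unfolding CA_def by blast
  have CB: "CB \<noteq> {}" using B unfolding CB_def by blast
  obtain s1 :: "nat \<times> nat \<Rightarrow> nat \<times> nat" where s1: "bij_betw s1 (B \<times> UNIV) (A \<times> UNIV)" using bij_inf[OF B(1) A(1)] by blast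
  obtain s2 :: "nat \<times> nat \<Rightarrow> nat \<times> nat" where s2: "bij_betw s2 (CB \<times> UNIV) (CA \<times> UNIV)" using bij_inf[OF CB CA] by blast
  define \<sigma> where "\<sigma> = (\<lambda>q. if fst q = 0 then q else if fst q \<in> B then s1 q else s2 q)"
  have A0: "0 \<notin> A" and B0: "0 \<notin> B" using A B by auto
  have b0: "bij_betw \<sigma> ({0} \<times> UNIV) ({0} \<times> UNIV)"
    by (rule bij_betw_cong[THEN iffD2, of _ _ id]) (auto simp: \<sigma>_def)
  have b1: "bij_betw \<sigma> (B \<times> UNIV) (A \<times> UNIV)"
    by (rule bij_betw_cong[THEN iffD2, OF _ s1]) (auto simp: \<sigma>_def B0)
  have b2: "bij_betw \<sigma> (CB \<times> UNIV) (CA \<times> UNIV)"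
    by (rule bij_betw_cong[THEN iffD2, OF _ s2]) (auto simp: \<sigma>_def CB_def)
  have b12: "bij_betw \<sigma> (B \<times> UNIV \<union> CB \<times> UNIV) (A \<times> UNIV \<union> CA \<times> UNIV)"
    by (rule bij_betw_combine[OF b1 b2]) (auto simp: CA_def)
  have ball: "bij_betw \<sigma> ({0} \<times> UNIV \<union> (B \<times> UNIV \<union> CB \<times> UNIV)) ({0} \<times> UNIV \<union> (A \<times> UNIV \<union> CA \<times> UNIV))"
    by (rule bij_betw_combine[OF b0 b12]) (auto simp: CA_def A0)
  have u1: "{0} \<times> UNIV \<union> (B \<times> UNIV \<union> CB \<times> UNIV) = (UNIV :: (nat \<times> nat) set)"
    by (auto simp: CB_def)
  have u2: "{0} \<times> UNIV \<union> (A \<times> UNIV \<union> CA \<times> UNIV) = (UNIV :: (nat \<times> nat) set)"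
    by (auto simp: CA_def)
  have bij: "bij \<sigma>" using ball unfolding u1 u2 bij_def by simp
  have fx: "\<forall>n. \<sigma> (0, n) = (0, n)" by (simp add: \<sigma>_def)
  have AB: "fst (\<sigma> q) \<in> A \<longleftrightarrow> fst q \<in> B" for q
  proof (cases "fst q = 0")
    case True then show ?thesis using A0 B0 by (simp add: \<sigma>_def)
  next
    case False
    show ?thesis
    proof (cases "fst q \<in> B")
      case True
      then have "q \<in> B \<times> UNIV" by (cases q) auto
      then have "s1 q \<in> A \<times> UNIV" using s1 bij_betwE by blast
      then show ?thesis using True False by (auto simp: \<sigma>_def)
    next
      case nB: False
      then have "q \<in> CB \<times> UNIV" using False by (cases q) (auto simp: CB_def)
      then have "s2 q \<in> CA \<times> UNIV" using s2 bij_betwE by blast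
      then show ?thesis using nB False by (auto simp: \<sigma>_def CA_def)
    qed
  qed
  show ?thesis using bij fx AB by blast
qed

lemma gp_exists:
  assumes p: "1 < p" and iso: "lp_sum_iso p TYPE('a::banach)"
    and A: "A \<noteq> {}" "A \<subset> {1..}" and B: "B \<noteq> {}" "B \<subset> {1..}"
  shows "\<exists>U U'. gp p A B (U :: ('a, 'b::real_normed_vector) zpt \<Rightarrow> ('a, 'b) zpt) U'"
proof -
  obtain T :: "(nat \<Rightarrow> 'a) \<Rightarrow> 'a" and c C where
    T: "bij_betw T (lp_seq p) UNIV"
      "\<forall>f\<in>lp_seq p. \<forall>g\<in>lp_seq p. T (\<lambda>n. f n + g n) = T f + T g"
      "\<forall>a. \<forall>f\<in>lp_seq p. T (\<lambda>n. a *\<^sub>R f n) = a *\<^sub>R T f"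
      "0 < c" "0 < C" "\<forall>f\<in>lp_seq p. c * lp_norm p f \<le> norm (T f) \<and> norm (T f) \<le> C * lp_norm p f"
    using iso unfolding lp_sum_iso_def by blast
  interpret L: lpiso p T c C
    by unfold_locales (use p T in auto)
  obtain \<sigma> :: "nat \<times> nat \<Rightarrow> nat \<times> nat" where \<sigma>: "bij \<sigma>" "\<forall>n. \<sigma> (0, n) = (0, n)" "\<And>q. fst (\<sigma> q) \<in> A \<longleftrightarrow> fst q \<in> B"
    using sigma_exists[OF A B] by blast
  have adm: "L.adm \<sigma>" using \<sigma> L.adm_def by blast
  define \<sigma>' where "\<sigma>' = inv \<sigma>"
  have adm': "L.adm \<sigma>'" unfolding \<sigma>'_def using L.adm_inv[OF adm] .
  have ii: "inv \<sigma>' = \<sigma>" unfolding \<sigma>'_def using \<sigma>(1) by (simp add: inv_inv_eq)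
  have BA: "fst (\<sigma>' q) \<in> B \<longleftrightarrow> fst q \<in> A" for q
  proof -
    have "\<sigma> (\<sigma>' q) = q" unfolding \<sigma>'_def using surj_f_inv_f[OF bij_is_surj[OF \<sigma>(1)]] by simp
    then show ?thesis using \<sigma>(3)[of "\<sigma>' q"] by simp
  qed
  define U :: "('a, 'b) zpt \<Rightarrow> ('a, 'b) zpt" where "U = L.Uop \<sigma>"
  define U' :: "('a, 'b) zpt \<Rightarrow> ('a, 'b) zpt" where "U' = L.Uop \<sigma>'"
  have Uop: "zoperator p U" unfolding U_def by (rule L.Uop_zoperator[OF adm])
  have Uop': "zoperator p U'" unfolding U'_def by (rule L.Uop_zoperator[OF adm'])
  have Uz: "U z = (fst z, L.V \<sigma> (snd z))" if "z \<in> Zp p" for z using that by (simp add: U_def L.Uop_def)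
  have U'z: "U' z = (fst z, L.V \<sigma>' (snd z))" if "z \<in> Zp p" for z using that by (simp add: U'_def L.Uop_def)
  have inv1: "U' (U z) = z \<and> U (U' z) = z" if z: "z \<in> Zp p" for z
  proof -
    have z0: "snd z 0 = 0" and sz: "summable (\<lambda>j. norm (snd z j) powr p)" using z Zp_iff by blast+
    have "U' (U z) = (fst z, L.V \<sigma>' (L.V \<sigma> (snd z)))"
      using U'z[OF zoperator_in[OF Uop z]] Uz[OF z] by simp
    also have "L.V \<sigma>' (L.V \<sigma> (snd z)) = snd z" unfolding \<sigma>'_def by (rule L.V_inv[OF adm z0 sz])
    finally have 1: "U' (U z) = z" by simp
    have "U (U' z) = (fst z, L.V \<sigma> (L.V \<sigma>' (snd z)))"
      using Uz[OF zoperator_in[OF Uop' z]] U'z[OF z] by simp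
    also have "L.V \<sigma> (L.V \<sigma>' (snd z)) = snd z" using L.V_inv[OF adm' z0 sz] ii by simp
    finally have 2: "U (U' z) = z" by simp
    show ?thesis using 1 2 by simp
  qed
  have y0: "(y, \<lambda>_. 0::'a) \<in> Zp p" for y :: 'b by (simp add: Zp_def)
  have g: "gp p A B U U'"
    unfolding gp_def
  proof (intro conjI Uop Uop' ballI allI impI)
    fix z :: "('a,'b) zpt" assume z: "z \<in> Zp p"
    show "U' (U z) = z" using inv1[OF z] by simp
    show "U (U' z) = z" using inv1[OF z] by simp
    show "fst (U z) = fst z" using Uz[OF z] by simp
    show "fst (U' z) = fst z" using U'z[OF z] by simp
  next
    fix y :: 'b
    show "U (y, \<lambda>_. 0) = (y, \<lambda>_. 0)" using Uz[OF y0] L.V_zero by simp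
    show "U' (y, \<lambda>_. 0) = (y, \<lambda>_. 0)" using U'z[OF y0] L.V_zero by simp
  next
    fix z :: "('a,'b) zpt" and j
    assume z: "z \<in> Zp p" and "fst z = 0" and sA: "\<forall>j. snd z j \<noteq> 0 \<longrightarrow> j \<in> A" and nz: "snd (U z) j \<noteq> 0"
    show "j \<in> B" by (rule L.V_supp[of \<sigma> A B "snd z" j]) (use \<sigma>(3) sA nz Uz[OF z] in auto)
  next
    fix z :: "('a,'b) zpt" and j
    assume z: "z \<in> Zp p" and "fst z = 0" and sB: "\<forall>j. snd z j \<noteq> 0 \<longrightarrow> j \<in> B" and nz: "snd (U' z) j \<noteq> 0"
    show "j \<in> A" by (rule L.V_supp[of \<sigma>' B A "snd z" j]) (use BA sB nz U'z[OF z] in auto)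
  qed
  then show ?thesis by blast
qed


lemma zopnorm_ge:
  assumes "zoperator p S" "z \<in> Zp p" "znorm p z \<le> 1"
  shows "znorm p (S z) \<le> zopnorm p S"
proof -
  obtain K where K: "K \<ge> 0" "\<And>z. z \<in> Zp p \<Longrightarrow> znorm p (S z) \<le> K * znorm p z"
    using zoperator_bound[OF assms(1)] by blast
  have "bdd_above {znorm p (S z) | z. z \<in> Zp p \<and> znorm p z \<le> 1}"
  proof (rule bdd_aboveI)
    fix x assume "x \<in> {znorm p (S z) | z. z \<in> Zp p \<and> znorm p z \<le> 1}"
    then obtain z where z: "x = znorm p (S z)" "z \<in> Zp p" "znorm p z \<le> 1" by blast
    have "x \<le> K * znorm p z" using K z by simp
    also have "\<dots> \<le> K" using K z by (simp add: mult_left_le)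
    finally show "x \<le> K" .
  qed
  moreover have "znorm p (S z) \<in> {znorm p (S z) | z. z \<in> Zp p \<and> znorm p z \<le> 1}"
    using assms by blast
  ultimately show ?thesis unfolding zopnorm_def by (intro cSup_upper)
qed

lemma zopnorm_conj:
  fixes S :: "('a::real_normed_vector, 'b::real_normed_vector) zpt \<Rightarrow> ('a, 'b) zpt"
  assumes p0: "p > 0" and S: "zoperator p S" and U: "zoperator p U" and U': "zoperator p U'"
    and KU: "\<And>z. z \<in> Zp p \<Longrightarrow> znorm p (U z) \<le> KU * znorm p z" "KU \<ge> 0"
    and K': "\<And>z. z \<in> Zp p \<Longrightarrow> znorm p (U' z) \<le> K' * znorm p z" "K' \<ge> 1"
  shows "zopnorm p (\<lambda>z. U (S (U' z))) \<le> KU * K' * zopnorm p S"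
  unfolding zopnorm_def[of p "\<lambda>z. U (S (U' z))"]
proof (rule cSup_least)
  show "{znorm p (U (S (U' z))) |z. z \<in> Zp p \<and> znorm p z \<le> 1} \<noteq> {}"
  proof -
    have "znorm p (zzero :: ('a,'b) zpt) = 0" by (simp add: znorm_def zzero_def)
    then have "znorm p (U (S (U' zzero))) \<in> {znorm p (U (S (U' z))) |z. z \<in> Zp p \<and> znorm p z \<le> 1}"
      using zzero_Zp[of p] by (metis (mono_tags, lifting) mem_Collect_eq zero_less_one less_imp_le)
    then show ?thesis by blast
  qed
  fix x assume "x \<in> {znorm p (U (S (U' z))) |z. z \<in> Zp p \<and> znorm p z \<le> 1}"
  then obtain z where z: "x = znorm p (U (S (U' z)))" "z \<in> Zp p" "znorm p z \<le> 1" by blast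
  have U'in: "U' z \<in> Zp p" using zoperator_in[OF U' z(2)] .
  define w where "w = zscale (1/K') (U' z)"
  have win: "w \<in> Zp p" unfolding w_def using Zp_zscale[OF U'in p0] .
  have wn: "znorm p w \<le> 1"
  proof -
    have "znorm p w = (1/K') * znorm p (U' z)" unfolding w_def using znorm_zscale[OF U'in p0] K' by simp
    also have "\<dots> \<le> (1/K') * (K' * znorm p z)" using K' z by (intro mult_left_mono) auto
    also have "\<dots> \<le> 1" using K' z by simp
    finally show ?thesis .
  qed
  have "U' z = zscale K' w" unfolding w_def using K' by (simp add: zscale_def)
  then have eq: "S (U' z) = zscale K' (S w)" using zoperator_scale[OF S win] by simp
  have Swin: "S w \<in> Zp p" using zoperator_in[OF S win] .
  have "x \<le> KU * znorm p (S (U' z))" using z KU zoperator_in[OF S U'in] by simp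
  also have "\<dots> = KU * (K' * znorm p (S w))" unfolding eq using znorm_zscale[OF Swin p0] K' by simp
  also have "\<dots> \<le> KU * (K' * zopnorm p S)"
    using zopnorm_ge[OF S win wn] KU K' by (intro mult_left_mono) auto
  finally show "x \<le> KU * K' * zopnorm p S" by (simp add: algebra_simps)
qed

lemma gp_bounds:
  assumes "gp p A B U U'"
  obtains KU K' where "\<And>z. z \<in> Zp p \<Longrightarrow> znorm p (U z) \<le> KU * znorm p z" "KU \<ge> 1"
    "\<And>z. z \<in> Zp p \<Longrightarrow> znorm p (U' z) \<le> K' * znorm p z" "K' \<ge> 1"
proof -
  have U: "zoperator p U" using assms unfolding gp_def by (elim conjE) blast
  have U': "zoperator p U'" using assms unfolding gp_def by (elim conjE) blast
  have ex: "\<exists>K\<ge>1. \<forall>z\<in>Zp p. znorm p (V z) \<le> K * znorm p z" if V: "zoperator p V" for V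
  proof -
    obtain K where K: "K \<ge> 0" "\<And>z. z \<in> Zp p \<Longrightarrow> znorm p (V z) \<le> K * znorm p z"
      using zoperator_bound[OF V] by blast
    have "znorm p (V z) \<le> max K 1 * znorm p z" if "z \<in> Zp p" for z
    proof -
      have "znorm p (V z) \<le> K * znorm p z" using K that by blast
      also have "\<dots> \<le> max K 1 * znorm p z" by (intro mult_right_mono) (auto simp: znorm_nonneg)
      finally show ?thesis .
    qed
    then show ?thesis by (intro exI[of _ "max K 1"]) auto
  qed
  obtain KU where "KU \<ge> 1" "\<forall>z\<in>Zp p. znorm p (U z) \<le> KU * znorm p z" using ex[OF U] by blast
  moreover obtain K' where "K' \<ge> 1" "\<forall>z\<in>Zp p. znorm p (U' z) \<le> K' * znorm p z" using ex[OF U'] by blast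
  ultimately show ?thesis using that by blast
qed

lemma conj_inverse:
  fixes S :: "('a::real_normed_vector, 'b::real_normed_vector) zpt \<Rightarrow> ('a, 'b) zpt"
  assumes g: "gp p A B U U'" and S: "zoperator p S" and p0: "p > 0"
  shows "(\<lambda>z. U' ((\<lambda>z. U (S (U' z))) (U z))) = S"
proof
  fix z :: "('a,'b) zpt"
  have U: "zoperator p U" using g unfolding gp_def by (elim conjE) blast
  have U': "zoperator p U'" using g unfolding gp_def by (elim conjE) blast
  have inv: "\<And>z. z \<in> Zp p \<Longrightarrow> U' (U z) = z" using g unfolding gp_def by (elim conjE) blast
  show "U' (U (S (U' (U z)))) = S z"
  proof (cases "z \<in> Zp p")
    case True
    then show ?thesis using inv zoperator_in[OF S True] by simp
  next
    case False
    then show ?thesis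
      by (simp add: zoperator_out[OF U] zoperator_zero[OF U' p0] zoperator_zero[OF S p0]
          zoperator_zero[OF U p0] zoperator_out[OF S])
  qed
qed

theorem theorem2p1:
  fixes p :: real and A B :: "nat set"
  assumes "1 < p"
    and "approximation_property TYPE('a::banach)"
    and "{T :: 'a \<Rightarrow> 'b::banach. approximable T} \<subset> {T. compact_op T}"
    and "lp_sum_iso p TYPE('a)"
    and "A \<noteq> {}" and "A \<subset> {1..}"
    and "B \<noteq> {}" and "B \<subset> {1..}"
  shows "\<exists>\<Phi>. banach_alg_iso p \<Phi> (IA p A :: (('a, 'b) zpt \<Rightarrow> ('a, 'b) zpt) set) (IA p B)"
proof -
  have p: "p > 1" and p0: "p > 0" using assms by auto
  obtain U U' :: "('a, 'b) zpt \<Rightarrow> ('a, 'b) zpt" where g: "gp p A B U U'"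
    using gp_exists[OF assms(1,4,5,6,7,8)] by blast
  have g': "gp p B A U' U" using gp_sym[OF g] .
  have A0: "0 \<notin> A" and B0: "0 \<notin> B" using assms(6,8) by auto
  have U: "zoperator p U" using g unfolding gp_def by (elim conjE) blast
  have U': "zoperator p U'" using g unfolding gp_def by (elim conjE) blast
  have inv1: "\<And>z. z \<in> Zp p \<Longrightarrow> U' (U z) = z" using g unfolding gp_def by (elim conjE) blast
  obtain KU K' where KU: "\<And>z. z \<in> Zp p \<Longrightarrow> znorm p (U z) \<le> KU * znorm p z" "KU \<ge> 1"
    and K': "\<And>z. z \<in> Zp p \<Longrightarrow> znorm p (U' z) \<le> K' * znorm p z" "K' \<ge> 1"
    using gp_bounds[OF g] by blast
  define \<Phi> where "\<Phi> = (\<lambda>(S :: ('a, 'b) zpt \<Rightarrow> ('a, 'b) zpt) z. U (S (U' z)))"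
  define \<Psi> where "\<Psi> = (\<lambda>(S :: ('a, 'b) zpt \<Rightarrow> ('a, 'b) zpt) z. U' (S (U z)))"
  have opA: "zoperator p S" if "S \<in> IA p A" for S using that unfolding IA_def zcompact_op_def by blast
  have opB: "zoperator p S" if "S \<in> IA p B" for S using that unfolding IA_def zcompact_op_def by blast
  have PhiIn: "\<Phi> S \<in> IA p B" if "S \<in> IA p A" for S
    unfolding \<Phi>_def using conj_in_IA[OF p g that B0] .
  have PsiIn: "\<Psi> S \<in> IA p A" if "S \<in> IA p B" for S
    unfolding \<Psi>_def using conj_in_IA[OF p g' that A0] .
  have PsiPhi: "\<Psi> (\<Phi> S) = S" if "S \<in> IA p A" for S
    unfolding \<Psi>_def \<Phi>_def using conj_inverse[OF g opA[OF that] p0] .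
  have PhiPsi: "\<Phi> (\<Psi> S) = S" if "S \<in> IA p B" for S
    unfolding \<Psi>_def \<Phi>_def using conj_inverse[OF g' opB[OF that] p0] .
  have bij: "bij_betw \<Phi> (IA p A) (IA p B)"
    by (rule bij_betw_byWitness[where f'=\<Psi>]) (use PhiIn PsiIn PsiPhi PhiPsi in auto)
  have add: "\<forall>S\<in>IA p A. \<forall>T\<in>IA p A. \<Phi> (\<lambda>z. zadd (S z) (T z)) = (\<lambda>z. zadd (\<Phi> S z) (\<Phi> T z))"
  proof (intro ballI ext)
    fix S T :: "('a, 'b) zpt \<Rightarrow> ('a, 'b) zpt" and z :: "('a, 'b) zpt" assume S: "S \<in> IA p A" and T: "T \<in> IA p A"
    show "\<Phi> (\<lambda>z. zadd (S z) (T z)) z = zadd (\<Phi> S z) (\<Phi> T z)"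
      unfolding \<Phi>_def using zoperator_add[OF U zoperator_any_in[OF opA[OF S]] zoperator_any_in[OF opA[OF T]]]
      by simp
  qed
  have scale: "\<forall>c. \<forall>S\<in>IA p A. \<Phi> (\<lambda>z. zscale c (S z)) = (\<lambda>z. zscale c (\<Phi> S z))"
  proof (intro allI ballI ext)
    fix c and S :: "('a, 'b) zpt \<Rightarrow> ('a, 'b) zpt" and z :: "('a, 'b) zpt" assume S: "S \<in> IA p A"
    show "\<Phi> (\<lambda>z. zscale c (S z)) z = zscale c (\<Phi> S z)"
      unfolding \<Phi>_def using zoperator_scale[OF U zoperator_any_in[OF opA[OF S]]] by simp
  qed
  have mult: "\<forall>S\<in>IA p A. \<forall>T\<in>IA p A. \<Phi> (S \<circ> T) = \<Phi> S \<circ> \<Phi> T"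
  proof (intro ballI ext)
    fix S T :: "('a, 'b) zpt \<Rightarrow> ('a, 'b) zpt" and z :: "('a, 'b) zpt" assume S: "S \<in> IA p A" and T: "T \<in> IA p A"
    show "\<Phi> (S \<circ> T) z = (\<Phi> S \<circ> \<Phi> T) z"
      unfolding \<Phi>_def using inv1[OF zoperator_any_in[OF opA[OF T]]] by simp
  qed
  have up: "\<forall>S\<in>IA p A. zopnorm p (\<Phi> S) \<le> (KU * K') * zopnorm p S"
  proof
    fix S :: "('a, 'b) zpt \<Rightarrow> ('a, 'b) zpt" assume S: "S \<in> IA p A"
    show "zopnorm p (\<Phi> S) \<le> (KU * K') * zopnorm p S"
      unfolding \<Phi>_def using zopnorm_conj[OF p0 opA[OF S] U U' KU(1) _ K'] KU(2) by simp
  qed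
  have low: "\<forall>S\<in>IA p A. (1 / (K' * KU)) * zopnorm p S \<le> zopnorm p (\<Phi> S)"
  proof
    fix S :: "('a, 'b) zpt \<Rightarrow> ('a, 'b) zpt" assume S: "S \<in> IA p A"
    have "zopnorm p S = zopnorm p (\<Psi> (\<Phi> S))" using PsiPhi[OF S] by simp
    also have "\<dots> \<le> K' * KU * zopnorm p (\<Phi> S)"
      unfolding \<Psi>_def using zopnorm_conj[OF p0 opB[OF PhiIn[OF S]] U' U K'(1) _ KU] K'(2) by simp
    finally have "zopnorm p S \<le> K' * KU * zopnorm p (\<Phi> S)" .
    then show "(1 / (K' * KU)) * zopnorm p S \<le> zopnorm p (\<Phi> S)"
      using KU K' by (simp add: field_simps)
  qed
  have "banach_alg_iso p \<Phi> (IA p A) (IA p B)"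
    unfolding banach_alg_iso_def
  proof (intro conjI bij add scale mult)
    show "\<exists>C. \<forall>S\<in>IA p A. zopnorm p (\<Phi> S) \<le> C * zopnorm p S" using up by blast
    show "\<exists>c>0. \<forall>S\<in>IA p A. c * zopnorm p S \<le> zopnorm p (\<Phi> S)"
      using low KU K' by (intro exI[of _ "1 / (K' * KU)"]) auto
  qed
  then show ?thesis by blast
qed


end
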